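(* Let $N,k\ge 1$ be integers, write $z=(x,y)\in\mathbb{R}^{N}\times\mathbb{R}^{k}=\mathbb{R}^{N+k}$, and let $\Delta_{\mathcal{G}}=\Delta_x+|x|^2\Delta_y$ be the Grushin operator. Let $p>1$ and let $u_0\in L^1(\mathbb{R}^{N+k})$ satisfy $\int_{\mathbb{R}^{N+k}}u_0(z)\,dz>0$. If $$p\le 1+\frac{2}{N+2k},$$ then the problem $$u_t-\Delta_{\mathcal{G}}u=|u|^{p-1}u\ \text{ in } \mathbb{R}^{N+k}\times(0,\infty),\qquad u(z,0)=u_0(z),$$ admits no global nonnegative weak solution.
   Context: Here $\Delta_x,\Delta_y$ are the Euclidean Laplacians in $x\in\mathbb{R}^N$ and $y\in\mathbb{R}^k$. For $T>0$, a function $u$ is a weak solution on $[0,T]$ if $u,\ |u|^{p-1}u\in L^1_{\mathrm{loc}}(\mathbb{R}^{N+k}\times(0,T))$ and for every compactly supported $\varphi\in C^{2,1}(\mathbb{R}^{N+k}\times[0,T])$ with $\varphi(\cdot,T)=0$, $$-\int_{\mathbb{R}^{N+k}}u_0(z)\varphi(z,0)\,dz=\int_0^T\!\!\int_{\mathbb{R}^{N+k}}|u|^{p-1}u\,\varphi\,dz\,dt+\int_0^T\!\!\int_{\mathbb{R}^{N+k}}u\,\Delta_{\mathcal{G}}\varphi\,dz\,dt+\int_0^T\!\!\int_{\mathbb{R}^{N+k}}u\,\varphi_t\,dz\,dt.$$ A global weak solution is a weak solution on $[0,T]$ for every $T>0$. *)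

theory Defs
  imports "HOL-Analysis.Analysis"
begin

text \<open>Points z = (x,y) of R^(N+k) are modelled as pairs in real^'n \<times> real^'k,
  with N = CARD('n) and k = CARD('k). Space-time points are ((x,y),t).\<close>

type_synonym ('n,'k) pt = "(real^'n) \<times> (real^'k)"

definition pd :: "('a::real_normed_vector \<Rightarrow> real) \<Rightarrow> 'a \<Rightarrow> 'a \<Rightarrow> real" where
  "pd f v z = deriv (\<lambda>s. f (z + s *\<^sub>R v)) 0"

definition grushin :: "(('n::finite,'k::finite) pt \<Rightarrow> real) \<Rightarrow> ('n,'k) pt \<Rightarrow> real" where
  "grushin f z =
     (\<Sum>i\<in>(Basis :: (real^'n) set). pd (pd f (i, 0)) (i, 0) z)
     + (norm (fst z))\<^sup>2 * (\<Sum>j\<in>(Basis :: (real^'k) set). pd (pd f (0, j)) (0, j) z)"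

definition dtime :: "real \<Rightarrow> ('z \<Rightarrow> real \<Rightarrow> real) \<Rightarrow> 'z \<Rightarrow> real \<Rightarrow> real" where
  "dtime T \<phi> z t = vector_derivative (\<lambda>s. \<phi> z s) (at t within {0..T})"

definition test_fun :: "real \<Rightarrow> ('z::euclidean_space \<Rightarrow> real \<Rightarrow> real) \<Rightarrow> bool" where
  "test_fun T \<phi> \<longleftrightarrow>
     (\<exists>K. compact K \<and> (\<forall>z. \<forall>t\<in>{0..T}. \<phi> z t \<noteq> 0 \<longrightarrow> z \<in> K)) \<and>
     (\<forall>z. \<forall>t\<in>{0..T}. \<forall>i\<in>Basis.
        (\<lambda>s. \<phi> (z + s *\<^sub>R i) t) field_differentiable (at 0)) \<and>
     (\<forall>z. \<forall>t\<in>{0..T}. \<forall>i\<in>Basis. \<forall>j\<in>Basis.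
        (\<lambda>s. pd (\<lambda>w. \<phi> w t) i (z + s *\<^sub>R j)) field_differentiable (at 0)) \<and>
     (\<forall>z. \<forall>t\<in>{0..T}. ((\<lambda>s. \<phi> z s) has_real_derivative dtime T \<phi> z t) (at t within {0..T})) \<and>
     continuous_on (UNIV \<times> {0..T}) (\<lambda>(z,t). \<phi> z t) \<and>
     (\<forall>i\<in>Basis. continuous_on (UNIV \<times> {0..T}) (\<lambda>(z,t). pd (\<lambda>w. \<phi> w t) i z)) \<and>
     (\<forall>i\<in>Basis. \<forall>j\<in>Basis.
        continuous_on (UNIV \<times> {0..T}) (\<lambda>(z,t). pd (pd (\<lambda>w. \<phi> w t) i) j z)) \<and>
     continuous_on (UNIV \<times> {0..T}) (\<lambda>(z,t). dtime T \<phi> z t) \<and>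
     (\<forall>z. \<phi> z T = 0)"

definition L1_loc :: "('a::euclidean_space) set \<Rightarrow> ('a \<Rightarrow> real) \<Rightarrow> bool" where
  "L1_loc S f \<longleftrightarrow> (\<forall>K. compact K \<and> K \<subseteq> S \<longrightarrow> set_integrable lborel K f)"

definition weak_solution ::
  "real \<Rightarrow> real \<Rightarrow> (('n::finite,'k::finite) pt \<Rightarrow> real) \<Rightarrow> (('n,'k) pt \<Rightarrow> real \<Rightarrow> real) \<Rightarrow> bool" where
  "weak_solution T p u0 u \<longleftrightarrow>
     L1_loc (UNIV \<times> {0<..<T}) (\<lambda>(z,t). u z t) \<and>
     L1_loc (UNIV \<times> {0<..<T}) (\<lambda>(z,t). \<bar>u z t\<bar> powr (p - 1) * u z t) \<and>
     (\<forall>\<phi>. test_fun T \<phi> \<longrightarrow>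
        - (\<integral>z. u0 z * \<phi> z 0 \<partial>lborel)
        = (LINT w : UNIV \<times> {0<..<T} | lborel. \<bar>u (fst w) (snd w)\<bar> powr (p - 1) * u (fst w) (snd w) * \<phi> (fst w) (snd w))
        + (LINT w : UNIV \<times> {0<..<T} | lborel. u (fst w) (snd w) * grushin (\<lambda>z. \<phi> z (snd w)) (fst w))
        + (LINT w : UNIV \<times> {0<..<T} | lborel. u (fst w) (snd w) * dtime T \<phi> (fst w) (snd w)))"

definition global_weak_solution ::
  "real \<Rightarrow> (('n::finite,'k::finite) pt \<Rightarrow> real) \<Rightarrow> (('n,'k) pt \<Rightarrow> real \<Rightarrow> real) \<Rightarrow> bool" where
  "global_weak_solution p u0 u \<longleftrightarrow> (\<forall>T>0. weak_solution T p u0 u)"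

end

theory Submission
  imports Defs
begin


definition pp :: "nat \<Rightarrow> real \<Rightarrow> real" where "pp n r = (max 0 r) ^ n"

lemma pp_deriv0:
  assumes "n \<ge> 2"
  shows "(pp n has_real_derivative 0) (at 0)"
proof -
  have "((\<lambda>h. (pp n (0 + h) - pp n 0) / h) \<longlongrightarrow> 0) (at 0)"
  proof (rule tendsto_sandwich[where f="\<lambda>h. - \<bar>h\<bar>" and h="\<lambda>h. \<bar>h\<bar>"])
    have b: "\<bar>(pp n h - pp n 0) / h\<bar> \<le> \<bar>h\<bar>" if "\<bar>h\<bar> \<le> 1" for h
    proof (cases "h > 0")
      case True
      have "(pp n h - pp n 0) / h = h ^ (n - 1)"
        using True assms by (simp add: pp_def power_eq_if) 
      moreover have "h ^ (n-1) \<le> h ^ 1" using True that assms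
        by (intro power_decreasing) auto
      ultimately show ?thesis using True by simp
    next
      case False
      then show ?thesis using assms by (simp add: pp_def max_def)
    qed
    have ev: "\<forall>\<^sub>F h in at (0::real). \<bar>h\<bar> < 1"
      using eventually_at_ball[of 1 0 UNIV] by (simp, rule eventually_mono) (auto simp: dist_real_def)
    show "\<forall>\<^sub>F h in at 0. - \<bar>h\<bar> \<le> (pp n (0 + h) - pp n 0) / h"
      using ev by (rule eventually_mono) (use b in \<open>smt (verit, best) add_0\<close>)
    show "\<forall>\<^sub>F h in at 0. (pp n (0 + h) - pp n 0) / h \<le> \<bar>h\<bar>"
      using ev by (rule eventually_mono) (use b in \<open>smt (verit, best) add_0\<close>)
    show "((\<lambda>h. - \<bar>h\<bar>) \<longlongrightarrow> 0) (at (0::real))" 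
      by (auto intro!: tendsto_eq_intros)
    show "((\<lambda>h. \<bar>h\<bar>) \<longlongrightarrow> 0) (at (0::real))" 
      by (auto intro!: tendsto_eq_intros)
  qed
  then show ?thesis by (simp add: DERIV_def)
qed

lemma pp_deriv:
  assumes "n \<ge> 2"
  shows "(pp n has_real_derivative (real n * pp (n - 1) r)) (at r)"
proof (cases "r = 0")
  case True
  then show ?thesis using pp_deriv0[OF assms] assms by (simp add: pp_def zero_power)
next
  case False
  show ?thesis
  proof (cases "r > 0")
    case True
    have "((\<lambda>s. s ^ n) has_real_derivative (real n * pp (n - 1) r)) (at r)"
      using True by (auto intro!: derivative_eq_intros simp: pp_def)
    then show ?thesis
      by (rule has_field_derivative_transform_within_open[where S="{0<..}"])
         (use True in \<open>auto simp: pp_def\<close>)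
  next
    case False
    with \<open>r \<noteq> 0\<close> have r: "r < 0" by simp
    have "((\<lambda>s. 0) has_real_derivative (real n * pp (n - 1) r)) (at r)"
      using r assms by (auto intro!: derivative_eq_intros simp: pp_def)
    then show ?thesis
      by (rule has_field_derivative_transform_within_open[where S="{..<0}"])
         (use r assms in \<open>auto simp: pp_def\<close>)
  qed
qed

lemma pp_nonneg: "pp n r \<ge> 0" by (simp add: pp_def)
lemma pp_cont[continuous_intros]: "continuous_on S f \<Longrightarrow> continuous_on S (\<lambda>x. pp n (f x))"
  unfolding pp_def by (intro continuous_intros)
lemma pp_contc[continuous_intros]: "isCont f x \<Longrightarrow> isCont (\<lambda>x. pp n (f x)) x"
  unfolding pp_def by (intro continuous_intros)

definition PP :: "real \<Rightarrow> real" where "PP s = pp 3 (s - 1) + pp 3 (- s - 1)"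
definition PP1 :: "real \<Rightarrow> real" where "PP1 s = 3 * pp 2 (s - 1) - 3 * pp 2 (- s - 1)"
definition PP2 :: "real \<Rightarrow> real" where "PP2 s = 6 * pp 1 (s - 1) + 6 * pp 1 (- s - 1)"
definition qf :: "real \<Rightarrow> real" where "qf s = max 0 (1 - PP s)"
definition gg :: "nat \<Rightarrow> real \<Rightarrow> real" where "gg m s = pp m (1 - PP s)"
definition gg1 :: "nat \<Rightarrow> real \<Rightarrow> real" where
  "gg1 m s = - (real m * pp (m - 1) (1 - PP s) * PP1 s)"
definition gg2 :: "nat \<Rightarrow> real \<Rightarrow> real" where
  "gg2 m s = real m * real (m - 1) * pp (m - 2) (1 - PP s) * (PP1 s)\<^sup>2 - real m * pp (m - 1) (1 - PP s) * PP2 s"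

lemma pp_chain[derivative_intros]:
  "n \<ge> 2 \<Longrightarrow> (f has_real_derivative f') (at x) \<Longrightarrow>
   ((\<lambda>x. pp n (f x)) has_real_derivative real n * pp (n - 1) (f x) * f') (at x)"
  using DERIV_chain2[OF pp_deriv] by blast

lemma PP_deriv: "(PP has_real_derivative PP1 s) (at s)"
  unfolding PP_def[abs_def] PP1_def
  by (rule derivative_eq_intros refl | simp)+

lemma PP1_deriv: "(PP1 has_real_derivative PP2 s) (at s)"
  unfolding PP1_def[abs_def] PP2_def
  by (rule derivative_eq_intros refl | simp)+

lemma gg_deriv: "m \<ge> 3 \<Longrightarrow> (gg m has_real_derivative gg1 m s) (at s)"
  unfolding gg_def[abs_def] gg1_def
  by (rule derivative_eq_intros refl PP_deriv | simp)+

lemma gg1_deriv: "m \<ge> 3 \<Longrightarrow> (gg1 m has_real_derivative gg2 m s) (at s)"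
  unfolding gg1_def[abs_def] gg2_def
  apply (rule derivative_eq_intros refl PP_deriv PP1_deriv | simp)+
  apply (simp add: power2_eq_square algebra_simps numeral_eq_Suc)
  done

lemma cont_PP[continuous_intros]: "continuous_on S f \<Longrightarrow> continuous_on S (\<lambda>x. PP (f x))"
  unfolding PP_def by (intro continuous_intros)
lemma cont_PP1[continuous_intros]: "continuous_on S f \<Longrightarrow> continuous_on S (\<lambda>x. PP1 (f x))"
  unfolding PP1_def by (intro continuous_intros)
lemma cont_PP2[continuous_intros]: "continuous_on S f \<Longrightarrow> continuous_on S (\<lambda>x. PP2 (f x))"
  unfolding PP2_def by (intro continuous_intros)
lemma cont_gg[continuous_intros]: "continuous_on S f \<Longrightarrow> continuous_on S (\<lambda>x. gg m (f x))"
  unfolding gg_def by (intro continuous_intros)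
lemma cont_gg1[continuous_intros]: "continuous_on S f \<Longrightarrow> continuous_on S (\<lambda>x. gg1 m (f x))"
  unfolding gg1_def by (intro continuous_intros)
lemma cont_gg2[continuous_intros]: "continuous_on S f \<Longrightarrow> continuous_on S (\<lambda>x. gg2 m (f x))"
  unfolding gg2_def by (intro continuous_intros)

lemma PP_nonneg: "PP s \<ge> 0" by (simp add: PP_def pp_nonneg)
lemma qf_bounds: "0 \<le> qf s" "qf s \<le> 1" using PP_nonneg[of s] by (auto simp: qf_def)
lemma gg_eq: "gg m s = qf s ^ m" by (simp add: gg_def qf_def pp_def)
lemma gg_bounds: "0 \<le> gg m s" "gg m s \<le> 1"
  using qf_bounds[of s] by (auto simp: gg_eq power_le_one)

lemma PP_small: "\<bar>s\<bar> \<le> 1 \<Longrightarrow> PP s = 0 \<and> PP1 s = 0 \<and> PP2 s = 0"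
  by (auto simp: PP_def PP1_def PP2_def pp_def max_def)

lemma gg_plateau: "m \<ge> 3 \<Longrightarrow> \<bar>s\<bar> \<le> 1 \<Longrightarrow> gg m s = 1 \<and> gg1 m s = 0 \<and> gg2 m s = 0"
  using PP_small[of s] by (auto simp: gg_def gg1_def gg2_def pp_def)

lemma PP_big: "\<bar>s\<bar> \<ge> 2 \<Longrightarrow> PP s \<ge> 1"
proof -
  assume "\<bar>s\<bar> \<ge> 2"
  then consider "s - 1 \<ge> 1" | "- s - 1 \<ge> 1" by linarith
  then show ?thesis
  proof cases
    case 1 then show ?thesis using pp_nonneg[of 3 "-s-1"] by (simp add: PP_def pp_def one_le_power)
  next
    case 2 then show ?thesis using pp_nonneg[of 3 "s-1"] by (simp add: PP_def pp_def one_le_power)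
  qed
qed

lemma qf_zero: "\<bar>s\<bar> \<ge> 2 \<Longrightarrow> qf s = 0"
  using PP_big by (auto simp: qf_def)

lemma PP_derivs_bound: "PP s < 1 \<Longrightarrow> \<bar>PP1 s\<bar> \<le> 6 \<and> \<bar>PP2 s\<bar> \<le> 12"
proof -
  assume a: "PP s < 1"
  have a1: "max 0 (s - 1) < 1"
  proof (rule ccontr)
    assume "\<not> ?thesis" then have "1 \<le> pp 3 (s - 1)" by (simp add: pp_def one_le_power)
    then show False using a pp_nonneg[of 3 "-s-1"] by (simp add: PP_def)
  qed
  have a2: "max 0 (- s - 1) < 1"
  proof (rule ccontr)
    assume "\<not> ?thesis" then have "1 \<le> pp 3 (- s - 1)" by (simp add: pp_def one_le_power)
    then show False using a pp_nonneg[of 3 "s-1"] by (simp add: PP_def)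
  qed
  have "pp 2 (s - 1) \<le> 1" "pp 2 (- s - 1) \<le> 1" "pp 1 (s - 1) \<le> 1" "pp 1 (- s - 1) \<le> 1"
    using a1 a2 by (auto simp: pp_def power_le_one)
  then show ?thesis using pp_nonneg[of 2 "s-1"] pp_nonneg[of 2 "-s-1"] pp_nonneg[of 1 "s-1"] pp_nonneg[of 1 "-s-1"]
    by (auto simp: PP1_def PP2_def)
qed

lemma gg1_bound: "m \<ge> 3 \<Longrightarrow> \<bar>gg1 m s\<bar> \<le> 48 * real m ^ 2 * qf s ^ (m - 2)"
proof -
  assume m: "m \<ge> 3"
  show ?thesis
  proof (cases "PP s < 1")
    case True
    have q: "pp (m - 1) (1 - PP s) = qf s ^ (m - 1)" by (simp add: pp_def qf_def)
    have "qf s ^ (m - 1) \<le> qf s ^ (m - 2)"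
      using qf_bounds[of s] m by (intro power_decreasing) auto
    moreover have "\<bar>gg1 m s\<bar> = real m * qf s ^ (m - 1) * \<bar>PP1 s\<bar>"
      using qf_bounds[of s] by (simp add: gg1_def abs_mult pp_def qf_def)
    moreover have "\<bar>PP1 s\<bar> \<le> 6" using PP_derivs_bound[OF True] by simp
    moreover have "real m \<le> real m ^ 2" using m by (simp add: power2_eq_square)
    ultimately have "\<bar>gg1 m s\<bar> \<le> real m * qf s ^ (m - 2) * 6"
      using qf_bounds[of s] by (auto intro!: mult_mono)
    also have "\<dots> = (6 * real m) * qf s ^ (m - 2)" by simp
    also have "\<dots> \<le> (48 * real m ^ 2) * qf s ^ (m - 2)"
      by (intro mult_right_mono) (use \<open>real m \<le> real m ^ 2\<close> in linarith, simp add: qf_bounds)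
    finally show ?thesis .
  next
    case False
    then have "pp (m - 1) (1 - PP s) = 0" using m by (simp add: pp_def max_def)
    then show ?thesis using qf_bounds[of s] by (simp add: gg1_def)
  qed
qed

lemma gg2_bound: "m \<ge> 3 \<Longrightarrow> \<bar>gg2 m s\<bar> \<le> 48 * real m ^ 2 * qf s ^ (m - 2)"
proof -
  assume m: "m \<ge> 3"
  show ?thesis
  proof (cases "PP s < 1")
    case True
    have q1: "pp (m - 1) (1 - PP s) = qf s ^ (m - 1)" by (simp add: pp_def qf_def)
    have q2: "pp (m - 2) (1 - PP s) = qf s ^ (m - 2)" by (simp add: pp_def qf_def)
    have le: "qf s ^ (m - 1) \<le> qf s ^ (m - 2)"
      using qf_bounds[of s] m by (intro power_decreasing) auto
    have b1: "\<bar>PP1 s\<bar> \<le> 6" "\<bar>PP2 s\<bar> \<le> 12" using PP_derivs_bound[OF True] by auto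
    have "(PP1 s)\<^sup>2 \<le> 36" using power_mono[OF b1(1), of 2] by simp
    have t1: "\<bar>real m * real (m - 1) * qf s ^ (m - 2) * (PP1 s)\<^sup>2\<bar> \<le> real m * real m * qf s ^ (m - 2) * 36"
      using qf_bounds[of s] \<open>(PP1 s)\<^sup>2 \<le> 36\<close> m
      by (simp add: abs_mult) (intro mult_mono, auto)
    have t2: "\<bar>real m * qf s ^ (m - 1) * PP2 s\<bar> \<le> real m * real m * qf s ^ (m - 2) * 12"
    proof -
      have "\<bar>real m * qf s ^ (m - 1) * PP2 s\<bar> = real m * qf s ^ (m - 1) * \<bar>PP2 s\<bar>"
        using qf_bounds[of s] by (simp add: abs_mult)
      also have "\<dots> \<le> real m * qf s ^ (m - 2) * 12"
        using le b1 qf_bounds[of s] by (intro mult_mono) auto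
      also have "\<dots> \<le> real m * real m * qf s ^ (m - 2) * 12"
        using m qf_bounds[of s] by (intro mult_right_mono mult_mono) auto
      finally show ?thesis .
    qed
    have "\<bar>gg2 m s\<bar> \<le> real m * real m * qf s ^ (m - 2) * 36 + real m * real m * qf s ^ (m - 2) * 12"
      unfolding gg2_def q1 q2 using t1 t2 by linarith
    then show ?thesis by (simp add: power2_eq_square algebra_simps)
  next
    case False
    then have "pp (m - 1) (1 - PP s) = 0" "pp (m - 2) (1 - PP s) = 0" using m by (auto simp: pp_def max_def)
    then show ?thesis using qf_bounds[of s] by (simp add: gg2_def)
  qed
qed

lemma gg1_nonpos: "m \<ge> 3 \<Longrightarrow> s \<ge> 0 \<Longrightarrow> gg1 m s \<le> 0"
  by (auto simp: gg1_def PP1_def pp_def max_def intro!: mult_nonneg_nonneg)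


lemma Basis_cart_eq: "(Basis :: (real^'n) set) = range (\<lambda>a. axis a 1)"
  by (auto simp: Basis_vec_def)

lemma sum_Basis_cart: "(\<Sum>b\<in>(Basis :: (real^'n) set). f b) = (\<Sum>a\<in>UNIV. f (axis a 1))"
  unfolding Basis_cart_eq by (subst sum.reindex) (auto simp: inj_on_def axis_eq_axis)

definition PF :: "real \<Rightarrow> ('n::finite \<Rightarrow> real \<Rightarrow> real) \<Rightarrow> ('k::finite \<Rightarrow> real \<Rightarrow> real) \<Rightarrow> ('n,'k) pt \<Rightarrow> real" where
  "PF c h k z = c * (\<Prod>i\<in>UNIV. h i (fst z $ i)) * (\<Prod>j\<in>UNIV. k j (snd z $ j))"

lemma PF_line_x:
  "PF c h k (z + s *\<^sub>R (axis a 1, 0)) =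
     (c * (\<Prod>i\<in>UNIV-{a}. h i (fst z $ i)) * (\<Prod>j\<in>UNIV. k j (snd z $ j))) * h a (fst z $ a + s)"
proof -
  have "(\<Prod>i\<in>UNIV. h i (fst (z + s *\<^sub>R (axis a 1, 0)) $ i)) =
        h a (fst z $ a + s) * (\<Prod>i\<in>UNIV-{a}. h i (fst z $ i))"
    by (subst prod.remove[of _ a]) (auto intro!: prod.cong simp: axis_def)
  then show ?thesis by (simp add: PF_def)
qed

lemma PF_line_y:
  "PF c h k (z + s *\<^sub>R (0, axis b 1)) =
     (c * (\<Prod>i\<in>UNIV. h i (fst z $ i)) * (\<Prod>j\<in>UNIV-{b}. k j (snd z $ j))) * k b (snd z $ b + s)"
proof -
  have "(\<Prod>j\<in>UNIV. k j (snd (z + s *\<^sub>R (0, axis b 1)) $ j)) =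
        k b (snd z $ b + s) * (\<Prod>j\<in>UNIV-{b}. k j (snd z $ j))"
    by (subst prod.remove[of _ b]) (auto intro!: prod.cong simp: axis_def)
  then show ?thesis by (simp add: PF_def)
qed

lemma line_deriv':
  assumes "\<And>s. (f has_real_derivative f' s) (at s)"
  shows "((\<lambda>s. C * f (x0 + s)) has_real_derivative C * f' x0) (at 0)"
proof -
  have "((\<lambda>s. f (x0 + s)) has_real_derivative f' (x0 + 0) * (0 + 1)) (at 0)"
    by (rule DERIV_chain2[OF assms]) (auto intro!: derivative_eq_intros)
  then show ?thesis by (auto intro!: derivative_eq_intros)
qed

lemma PF_upd_x: "PF c (h(a := f)) k z = (c * (\<Prod>i\<in>UNIV-{a}. h i (fst z $ i)) * (\<Prod>j\<in>UNIV. k j (snd z $ j))) * f (fst z $ a)"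
proof -
  have "(\<Prod>i\<in>UNIV. (h(a := f)) i (fst z $ i)) = f (fst z $ a) * (\<Prod>i\<in>UNIV-{a}. h i (fst z $ i))"
    by (subst prod.remove[of _ a]) (auto intro!: prod.cong)
  then show ?thesis by (simp add: PF_def)
qed

lemma PF_upd_y: "PF c h (k(b := f)) z = (c * (\<Prod>i\<in>UNIV. h i (fst z $ i)) * (\<Prod>j\<in>UNIV-{b}. k j (snd z $ j))) * f (snd z $ b)"
proof -
  have "(\<Prod>j\<in>UNIV. (k(b := f)) j (snd z $ j)) = f (snd z $ b) * (\<Prod>j\<in>UNIV-{b}. k j (snd z $ j))"
    by (subst prod.remove[of _ b]) (auto intro!: prod.cong)
  then show ?thesis by (simp add: PF_def)
qed

lemma PF_line_x_deriv:
  assumes "\<And>s. (h a has_real_derivative f s) (at s)"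
  shows "((\<lambda>s. PF c h k (z + s *\<^sub>R (axis a 1, 0))) has_real_derivative PF c (h(a := f)) k z) (at 0)"
  unfolding PF_line_x PF_upd_x by (rule line_deriv'[OF assms])

lemma PF_line_y_deriv:
  assumes "\<And>s. (k b has_real_derivative f s) (at s)"
  shows "((\<lambda>s. PF c h k (z + s *\<^sub>R (0, axis b 1))) has_real_derivative PF c h (k(b := f)) z) (at 0)"
  unfolding PF_line_y PF_upd_y by (rule line_deriv'[OF assms])

lemma pd_PF_x:
  assumes "\<And>s. (h a has_real_derivative f s) (at s)"
  shows "pd (PF c h k) (axis a 1, 0) z = PF c (h(a := f)) k z"
  unfolding pd_def by (rule DERIV_imp_deriv, rule PF_line_x_deriv[of h a f], rule assms)

lemma pd_PF_y:
  assumes "\<And>s. (k b has_real_derivative f s) (at s)"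
  shows "pd (PF c h k) (0, axis b 1) z = PF c h (k(b := f)) z"
  unfolding pd_def by (rule DERIV_imp_deriv, rule PF_line_y_deriv[of k b f], rule assms)

lemma pd_PF_x_fun:
  assumes "\<And>s. (h a has_real_derivative f s) (at s)"
  shows "pd (PF c h k) (axis a 1, 0) = PF c (h(a := f)) k"
  using pd_PF_x[of h a f, OF assms] by blast

lemma pd_PF_y_fun:
  assumes "\<And>s. (k b has_real_derivative f s) (at s)"
  shows "pd (PF c h k) (0, axis b 1) = PF c h (k(b := f))"
  using pd_PF_y[of k b f, OF assms] by blast

lemma PF_cont[continuous_intros]:
  fixes U :: "real set" and h :: "'n::finite \<Rightarrow> real \<Rightarrow> real" and k :: "'k::finite \<Rightarrow> real \<Rightarrow> real"
  assumes "continuous_on U c" "\<And>i. continuous_on UNIV (h i)" "\<And>j. continuous_on UNIV (k j)"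
  shows "continuous_on (UNIV \<times> U) (\<lambda>(z, t). PF (c t) h k z)"
proof -
  define S where "S = (UNIV \<times> U :: (('n,'k) pt \<times> real) set)"
  have h: "continuous_on S (\<lambda>w. h i (fst (fst w) $ i))" for i
    by (rule continuous_on_compose2[OF assms(2)[of i]]) (auto intro!: continuous_intros)
  have k: "continuous_on S (\<lambda>w. k j (snd (fst w) $ j))" for j
    by (rule continuous_on_compose2[OF assms(3)[of j]]) (auto intro!: continuous_intros)
  have "continuous_on S (\<lambda>w. c (snd w) * (\<Prod>i\<in>UNIV. h i (fst (fst w) $ i)) * (\<Prod>j\<in>UNIV. k j (snd (fst w) $ j)))"
    by (intro continuous_intros h k continuous_on_compose2[OF assms(1)]) (auto simp: S_def)
  then show ?thesis by (simp add: PF_def case_prod_unfold S_def)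
qed


definition fam_deriv :: "('i \<Rightarrow> real \<Rightarrow> real) \<Rightarrow> ('i \<Rightarrow> real \<Rightarrow> real) \<Rightarrow> bool" where
  "fam_deriv h h' \<longleftrightarrow> (\<forall>i s. (h i has_real_derivative h' i s) (at s))"
definition fam_cont :: "('i \<Rightarrow> real \<Rightarrow> real) \<Rightarrow> bool" where
  "fam_cont h \<longleftrightarrow> (\<forall>i. continuous_on UNIV (h i))"

lemma fam_deriv_upd: "fam_deriv h h1 \<Longrightarrow> fam_deriv h1 h2 \<Longrightarrow> fam_deriv (h(a := h1 a)) (h1(a := h2 a))"
  by (auto simp: fam_deriv_def)
lemma fam_cont_upd: "fam_cont h \<Longrightarrow> continuous_on UNIV f \<Longrightarrow> fam_cont (h(a := f))"
  by (auto simp: fam_cont_def)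
lemma fam_contD: "fam_cont h \<Longrightarrow> continuous_on UNIV (h i)"
  by (auto simp: fam_cont_def)

lemma Basis_pt_cases:
  fixes v :: "('n::finite,'k::finite) pt"
  assumes "v \<in> Basis"
  obtains a where "v = (axis a 1, 0)" | b where "v = (0, axis b 1)"
  using assms by (auto simp: Basis_prod_def Basis_vec_def)

lemma pd_PF_fun_gen:
  fixes h :: "'n::finite \<Rightarrow> real \<Rightarrow> real" and k :: "'k::finite \<Rightarrow> real \<Rightarrow> real"
  assumes "fam_deriv h h1" "fam_deriv k k1" "v \<in> Basis"
  obtains a where "v = (axis a 1, 0)" "pd (PF c h k) v = PF c (h(a := h1 a)) k"
        | b where "v = (0, axis b 1)" "pd (PF c h k) v = PF c h (k(b := k1 b))"
  using assms(3)
proof (cases rule: Basis_pt_cases)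
  case (1 a)
  then show ?thesis using that(1)[of a] pd_PF_x_fun[of h a "h1 a" c k] assms(1)
    by (auto simp: fam_deriv_def)
next
  case (2 b)
  then show ?thesis using that(2)[of b] pd_PF_y_fun[of k b "k1 b" c h] assms(2)
    by (auto simp: fam_deriv_def)
qed

lemma pd_PF_gen2:
  fixes h :: "'n::finite \<Rightarrow> real \<Rightarrow> real" and k :: "'k::finite \<Rightarrow> real \<Rightarrow> real"
  assumes "fam_deriv h h1" "fam_deriv k k1" "v \<in> Basis"
    "fam_cont h" "fam_cont k" "fam_cont h1" "fam_cont k1"
  shows "\<exists>h' k'. (\<forall>c. pd (PF c h k) v = PF c h' k') \<and> fam_cont h' \<and> fam_cont k'"
  using assms(3)
proof (cases rule: Basis_pt_cases)
  case (1 a)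
  then show ?thesis using pd_PF_x_fun[of h a "h1 a" _ k] assms
    by (intro exI[of _ "h(a := h1 a)"] exI[of _ k]) (auto simp: fam_deriv_def intro!: fam_cont_upd fam_contD)
next
  case (2 b)
  then show ?thesis using pd_PF_y_fun[of k b "k1 b" _ h] assms
    by (intro exI[of _ h] exI[of _ "k(b := k1 b)"]) (auto simp: fam_deriv_def intro!: fam_cont_upd fam_contD)
qed

lemma PF_line_diff:
  fixes h :: "'n::finite \<Rightarrow> real \<Rightarrow> real" and k :: "'k::finite \<Rightarrow> real \<Rightarrow> real"
  assumes "fam_deriv h h1" "fam_deriv k k1" "v \<in> Basis"
  shows "(\<lambda>s. PF c h k (z + s *\<^sub>R v)) field_differentiable (at 0)"
  using assms(3)
proof (cases rule: Basis_pt_cases)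
  case (1 a)
  then show ?thesis using PF_line_x_deriv[of h a "h1 a" c k z] assms(1)
    by (auto simp: fam_deriv_def field_differentiable_def)
next
  case (2 b)
  then show ?thesis using PF_line_y_deriv[of k b "k1 b" c h z] assms(2)
    by (auto simp: fam_deriv_def field_differentiable_def)
qed

lemma PF_scal: "PF c h k z = c * PF 1 h k z"
  by (simp add: PF_def)

lemma dtime_PF:
  assumes "\<And>s. (ct has_real_derivative ct1 s) (at s)" "T > 0" "t \<in> {0..T}"
  shows "dtime T (\<lambda>z t. PF (ct t) h k z) z t = ct1 t * PF 1 h k z"
proof -
  have "((\<lambda>s. ct s * PF 1 h k z) has_real_derivative ct1 t * PF 1 h k z) (at t)"
    using assms(1)[of t] by (auto intro!: derivative_eq_intros)
  then have "((\<lambda>s. PF (ct s) h k z) has_vector_derivative ct1 t * PF 1 h k z) (at t)"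
    by (subst PF_scal) (simp add: has_real_derivative_iff_has_vector_derivative)
  then show ?thesis unfolding dtime_def
    using assms(2,3) by (intro vector_derivative_at_within_ivl) auto
qed

lemma grushin_PF:
  fixes H :: "'n::finite \<Rightarrow> real \<Rightarrow> real" and K :: "'k::finite \<Rightarrow> real \<Rightarrow> real"
  assumes dH: "fam_deriv H H1" "fam_deriv H1 H2" and dK: "fam_deriv K K1" "fam_deriv K1 K2"
  shows "grushin (PF c H K) z = (\<Sum>a\<in>UNIV. PF c (H(a := H2 a)) K z)
           + (norm (fst z))\<^sup>2 * (\<Sum>b\<in>UNIV. PF c H (K(b := K2 b)) z)"
proof -
  have x: "pd (pd (PF c H K) (axis a 1, 0)) (axis a 1, 0) z = PF c (H(a := H2 a)) K z" for a
  proof -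
    have "pd (PF c H K) (axis a 1, 0) = PF c (H(a := H1 a)) K"
      using pd_PF_x_fun[of H a "H1 a" c K] dH(1) unfolding fam_deriv_def by blast
    moreover have "pd (PF c (H(a := H1 a)) K) (axis a 1, 0) z = PF c ((H(a := H1 a))(a := H2 a)) K z"
      using pd_PF_x[of "H(a := H1 a)" a "H2 a" c K z] dH(2) unfolding fam_deriv_def by simp
    ultimately show ?thesis by simp
  qed
  have y: "pd (pd (PF c H K) (0, axis b 1)) (0, axis b 1) z = PF c H (K(b := K2 b)) z" for b
  proof -
    have "pd (PF c H K) (0, axis b 1) = PF c H (K(b := K1 b))"
      using pd_PF_y_fun[of K b "K1 b" c H] dK(1) unfolding fam_deriv_def by blast
    moreover have "pd (PF c H (K(b := K1 b))) (0, axis b 1) z = PF c H ((K(b := K1 b))(b := K2 b)) z"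
      using pd_PF_y[of "K(b := K1 b)" b "K2 b" c H z] dK(2) unfolding fam_deriv_def by simp
    ultimately show ?thesis by simp
  qed
  show ?thesis unfolding grushin_def sum_Basis_cart x y by simp
qed

lemma test_fun_PF:
  fixes H :: "'n::finite \<Rightarrow> real \<Rightarrow> real" and K :: "'k::finite \<Rightarrow> real \<Rightarrow> real"
  assumes dH: "fam_deriv H H1" "fam_deriv H1 H2" and cH: "fam_cont H" "fam_cont H1" "fam_cont H2"
    and dK: "fam_deriv K K1" "fam_deriv K1 K2" and cK: "fam_cont K" "fam_cont K1" "fam_cont K2"
    and dct: "\<And>s. (ct has_real_derivative ct1 s) (at s)" and cct: "continuous_on UNIV ct1"
    and suppH: "\<And>i s. r \<le> \<bar>s\<bar> \<Longrightarrow> H i s = 0" and suppK: "\<And>j s. r \<le> \<bar>s\<bar> \<Longrightarrow> K j s = 0"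
    and T: "T > 0" "ct T = 0"
  shows "test_fun T (\<lambda>z t. PF (ct t) H K z)"
proof -
  have cct0: "continuous_on UNIV ct" using dct
    by (meson DERIV_continuous continuous_at_imp_continuous_on)
  define K0 where "K0 = cbox (- r *\<^sub>R (One :: ('n,'k) pt)) (r *\<^sub>R One)"
  have supp: "z \<in> K0" if "PF (ct t) H K z \<noteq> 0" for z t
  proof -
    have x: "\<bar>fst z $ i\<bar> \<le> r" for i
    proof (rule ccontr)
      assume "\<not> ?thesis"
      then have "H i (fst z $ i) = 0" using suppH by auto
      then have "(\<Prod>i\<in>UNIV. H i (fst z $ i)) = 0" by (intro prod_zero) auto
      then show False using that by (simp add: PF_def)
    qed
    have y: "\<bar>snd z $ j\<bar> \<le> r" for j
    proof (rule ccontr)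
      assume "\<not> ?thesis"
      then have "K j (snd z $ j) = 0" using suppK by auto
      then have "(\<Prod>j\<in>UNIV. K j (snd z $ j)) = 0" by (intro prod_zero) auto
      then show False using that by (simp add: PF_def)
    qed
    show ?thesis unfolding K0_def mem_box
    proof (intro ballI)
      fix v :: "('n,'k) pt" assume v: "v \<in> Basis"
      have o: "(One :: ('n,'k) pt) \<bullet> v = 1" using v by simp
      from v show "(- r *\<^sub>R One) \<bullet> v \<le> z \<bullet> v \<and> z \<bullet> v \<le> (r *\<^sub>R One) \<bullet> v"
      proof (cases rule: Basis_pt_cases)
        case (1 a) then show ?thesis using x[of a] o by (auto simp: inner_Pair_0 inner_axis)
      next
        case (2 b) then show ?thesis using y[of b] o by (auto simp: inner_Pair_0 inner_axis)
      qed
    qed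
  qed
  have pdfun: "\<And>v. v \<in> Basis \<Longrightarrow> \<exists>h1 k1 h2 k2. (\<forall>c. pd (\<lambda>w. PF c H K w) v = PF c h1 k1) \<and>
       fam_deriv h1 h2 \<and> fam_deriv k1 k2 \<and> fam_cont h1 \<and> fam_cont k1 \<and> fam_cont h2 \<and> fam_cont k2"
  proof -
    fix v :: "('n,'k) pt" assume v: "v \<in> Basis"
    from v show "?thesis v"
    proof (cases rule: Basis_pt_cases)
      case (1 a)
      have eq: "\<And>c. pd (PF c H K) (axis a 1, 0) = PF c (H(a := H1 a)) K"
        using pd_PF_x_fun[of H a "H1 a" _ K] dH(1) unfolding fam_deriv_def by blast
      show ?thesis using eq 1
        by (intro exI[of _ "H(a := H1 a)"] exI[of _ K] exI[of _ "H1(a := H2 a)"] exI[of _ K1])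
          (auto intro!: fam_deriv_upd fam_cont_upd fam_contD dH dK cH cK)
    next
      case (2 b)
      have eq: "\<And>c. pd (PF c H K) (0, axis b 1) = PF c H (K(b := K1 b))"
        using pd_PF_y_fun[of K b "K1 b" _ H] dK(1) unfolding fam_deriv_def by blast
      show ?thesis using eq 2
        by (intro exI[of _ H] exI[of _ "K(b := K1 b)"] exI[of _ H1] exI[of _ "K1(b := K2 b)"])
          (auto intro!: fam_deriv_upd fam_cont_upd fam_contD dH dK cH cK)
    qed
  qed
  have line2: "(\<lambda>s. pd (\<lambda>w. PF c H K w) v (z + s *\<^sub>R u)) field_differentiable (at 0)"
    if vu: "v \<in> Basis" "u \<in> Basis" for v u z c
  proof -
    obtain h1 k1 h2 k2 where "pd (\<lambda>w. PF c H K w) v = PF c h1 k1" "fam_deriv h1 h2" "fam_deriv k1 k2"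
      using pdfun[OF vu(1)] by blast
    then show ?thesis using PF_line_diff[of h1 h2 k1 k2 u c z] vu(2) by simp
  qed
  have cont1: "continuous_on (UNIV \<times> {0..T}) (\<lambda>(z, t). pd (\<lambda>w. PF (ct t) H K w) v z)"
    if "v \<in> Basis" for v
  proof -
    from that show ?thesis
      using dH(1) dK(1)
    proof (cases rule: Basis_pt_cases)
      case (1 a)
      have "pd (\<lambda>w. PF (ct t) H K w) v z = PF (ct t) (H(a := H1 a)) K z" for t z
        using pd_PF_x[of H a "H1 a" "ct t" K z] dH(1) 1 by (simp add: fam_deriv_def)
      moreover have "continuous_on (UNIV \<times> {0..T}) (\<lambda>(z, t). PF (ct t) (H(a := H1 a)) K z)"
        by (intro PF_cont continuous_on_subset[OF cct0] fam_contD fam_cont_upd cH cK) auto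
      ultimately show ?thesis by simp
    next
      case (2 b)
      have "pd (\<lambda>w. PF (ct t) H K w) v z = PF (ct t) H (K(b := K1 b)) z" for t z
        using pd_PF_y[of K b "K1 b" "ct t" H z] dK(1) 2 by (simp add: fam_deriv_def)
      moreover have "continuous_on (UNIV \<times> {0..T}) (\<lambda>(z, t). PF (ct t) H (K(b := K1 b)) z)"
        by (intro PF_cont continuous_on_subset[OF cct0] fam_contD fam_cont_upd cH cK) auto
      ultimately show ?thesis by simp
    qed
  qed
  show ?thesis
    unfolding test_fun_def
  proof (intro conjI ballI allI)
    show "\<exists>S. compact S \<and> (\<forall>z. \<forall>t\<in>{0..T}. PF (ct t) H K z \<noteq> 0 \<longrightarrow> z \<in> S)"
      using supp by (intro exI[of _ K0]) (auto simp: K0_def)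
    show "(\<lambda>s. PF (ct t) H K (z + s *\<^sub>R i)) field_differentiable at 0" if "i \<in> Basis" for z t i
      by (rule PF_line_diff[OF dH(1) dK(1) that])
    show "(\<lambda>s. pd (\<lambda>w. PF (ct t) H K w) i (z + s *\<^sub>R j)) field_differentiable at 0"
      if "i \<in> Basis" "j \<in> Basis" for z t i j
      by (rule line2[OF that])
    show "((\<lambda>s. PF (ct s) H K z) has_real_derivative dtime T (\<lambda>z t. PF (ct t) H K z) z t) (at t within {0..T})"
      if "t \<in> {0..T}" for z t
    proof -
      have "((\<lambda>s. ct s * PF 1 H K z) has_real_derivative ct1 t * PF 1 H K z) (at t)"
        using dct[of t] by (auto intro!: derivative_eq_intros)
      then show ?thesis using dtime_PF[OF dct T(1) that, of H K z]
        by (subst (asm) PF_scal[symmetric]) (auto intro: has_field_derivative_at_within)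
    qed
    show "continuous_on (UNIV \<times> {0..T}) (\<lambda>(z, t). PF (ct t) H K z)"
      by (intro PF_cont continuous_on_subset[OF cct0] fam_contD cH cK) auto
    show "continuous_on (UNIV \<times> {0..T}) (\<lambda>(z, t). pd (\<lambda>w. PF (ct t) H K w) i z)" if "i \<in> Basis" for i
      by (rule cont1[OF that])
    show "continuous_on (UNIV \<times> {0..T}) (\<lambda>(z, t). pd (pd (\<lambda>w. PF (ct t) H K w) i) j z)"
      if ij: "i \<in> Basis" "j \<in> Basis" for i j
    proof -
      obtain h1 k1 h2 k2 where hk: "\<And>c. pd (\<lambda>w. PF c H K w) i = PF c h1 k1" "fam_deriv h1 h2" "fam_deriv k1 k2"
        "fam_cont h1" "fam_cont k1" "fam_cont h2" "fam_cont k2"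
        using pdfun[OF ij(1)] by blast
      obtain h' k' where hk': "\<And>c. pd (PF c h1 k1) j = PF c h' k'" "fam_cont h'" "fam_cont k'"
        using pd_PF_gen2[OF hk(2,3) ij(2) hk(4-7)] by blast
      have "continuous_on (UNIV \<times> {0..T}) (\<lambda>(z, t). PF (ct t) h' k' z)"
        by (intro PF_cont continuous_on_subset[OF cct0] fam_contD hk') auto
      then show ?thesis by (simp add: hk hk')
    qed
    show "continuous_on (UNIV \<times> {0..T}) (\<lambda>(z, t). dtime T (\<lambda>z t. PF (ct t) H K z) z t)"
    proof -
      have "continuous_on (UNIV \<times> {0..T}) (\<lambda>(z, t). PF (ct1 t) H K z)"
        by (intro PF_cont continuous_on_subset[OF cct] fam_contD cH cK) auto
      then show ?thesis
        by (rule continuous_on_eq) (auto simp: dtime_PF[OF dct T(1)] PF_scal[of "ct1 _"])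
    qed
    show "PF (ct T) H K z = 0" for z using T by (simp add: PF_def)
  qed
qed


lemma prod_bound_upd:
  fixes q :: "'i::finite \<Rightarrow> real"
  assumes q: "\<And>i. 0 \<le> q i" "\<And>i. q i \<le> 1" and f: "\<bar>f\<bar> \<le> C * q a ^ n" and nm: "n \<le> m"
  shows "\<bar>(\<Prod>i\<in>UNIV-{a}. q i ^ m) * f\<bar> \<le> C * (\<Prod>i\<in>UNIV. q i ^ n)"
proof -
  have "(\<Prod>i\<in>UNIV-{a}. q i ^ m) \<le> (\<Prod>i\<in>UNIV-{a}. q i ^ n)"
    using q nm by (intro prod_mono) (auto intro: power_decreasing)
  moreover have "0 \<le> (\<Prod>i\<in>UNIV-{a}. q i ^ m)" using q by (intro prod_nonneg) auto
  ultimately have "\<bar>(\<Prod>i\<in>UNIV-{a}. q i ^ m) * f\<bar> \<le> (\<Prod>i\<in>UNIV-{a}. q i ^ n) * (C * q a ^ n)"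
    using f by (simp add: abs_mult) (intro mult_mono, auto)
  also have "\<dots> = C * (\<Prod>i\<in>UNIV. q i ^ n)"
    by (subst prod.remove[of UNIV a]) auto
  finally show ?thesis .
qed

definition HH :: "nat \<Rightarrow> real \<Rightarrow> 'i \<Rightarrow> real \<Rightarrow> real" where "HH m \<rho> = (\<lambda>i s. gg m (s / \<rho>))"
definition HH1 :: "nat \<Rightarrow> real \<Rightarrow> 'i \<Rightarrow> real \<Rightarrow> real" where "HH1 m \<rho> = (\<lambda>i s. gg1 m (s / \<rho>) / \<rho>)"
definition HH2 :: "nat \<Rightarrow> real \<Rightarrow> 'i \<Rightarrow> real \<Rightarrow> real" where "HH2 m \<rho> = (\<lambda>i s. gg2 m (s / \<rho>) / \<rho>^2)"

lemma scaled_deriv: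
  assumes "\<rho> \<noteq> 0" "\<And>s. (f has_real_derivative f' s) (at s)"
  shows "((\<lambda>s. f (s / \<rho>)) has_real_derivative f' (s / \<rho>) / \<rho>) (at s)"
proof -
  have "((\<lambda>s. s / \<rho>) has_real_derivative 1 / \<rho>) (at s)"
    using assms(1) by (auto intro!: derivative_eq_intros)
  from DERIV_chain2[OF assms(2) this] show ?thesis by simp
qed

lemma HH_deriv: "m \<ge> 3 \<Longrightarrow> \<rho> > 0 \<Longrightarrow> fam_deriv (HH m \<rho>) (HH1 m \<rho>)"
  unfolding fam_deriv_def HH_def HH1_def using scaled_deriv[OF _ gg_deriv] by force

lemma HH1_deriv: "m \<ge> 3 \<Longrightarrow> \<rho> > 0 \<Longrightarrow> fam_deriv (HH1 m \<rho>) (HH2 m \<rho>)"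
  unfolding fam_deriv_def HH1_def HH2_def
proof (intro allI)
  fix i :: 'a and s
  assume "m \<ge> 3" "\<rho> > 0"
  have "((\<lambda>s. (1 / \<rho>) * gg1 m (s / \<rho>)) has_real_derivative (1 / \<rho>) * (gg2 m (s / \<rho>) / \<rho>)) (at s)"
    by (intro DERIV_cmult scaled_deriv[OF _ gg1_deriv[OF \<open>m \<ge> 3\<close>]]) (use \<open>\<rho> > 0\<close> in auto)
  then show "((\<lambda>s. gg1 m (s / \<rho>) / \<rho>) has_real_derivative gg2 m (s / \<rho>) / \<rho>\<^sup>2) (at s)"
    by (simp add: power2_eq_square)
qed

lemma HH_cont: "\<rho> > 0 \<Longrightarrow> fam_cont (HH m \<rho>)" "\<rho> > 0 \<Longrightarrow> fam_cont (HH1 m \<rho>)" "\<rho> > 0 \<Longrightarrow> fam_cont (HH2 m \<rho>)"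
  unfolding fam_cont_def HH_def HH1_def HH2_def by (auto intro!: continuous_intros)

lemma qf_zero_scaled: "\<rho> > 0 \<Longrightarrow> 2 * \<rho> \<le> \<bar>s\<bar> \<Longrightarrow> qf (s / \<rho>) = 0"
  by (rule qf_zero) (simp add: field_simps abs_divide)

lemma HH_supp: "m \<ge> 3 \<Longrightarrow> \<rho> > 0 \<Longrightarrow> 2 * \<rho> \<le> \<bar>s\<bar> \<Longrightarrow> HH m \<rho> i s = 0"
  using qf_zero_scaled[of \<rho> s] by (simp add: HH_def gg_eq)

definition Th :: "real \<Rightarrow> ('n::finite,'k::finite) pt \<Rightarrow> real" where
  "Th R z = (\<Prod>i\<in>UNIV. qf (fst z $ i / R)) * (\<Prod>j\<in>UNIV. qf (snd z $ j / R^2))"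

lemma Th_bounds: "0 \<le> Th R z" "Th R z \<le> 1"
  unfolding Th_def using qf_bounds
  by (auto intro!: prod_nonneg mult_le_one prod_le_1 mult_nonneg_nonneg)

lemma PF_Th: "PF c (HH m R) (HH m (R^2)) z = c * Th R z ^ m"
  by (simp add: PF_def HH_def Th_def gg_eq power_mult_distrib prod_power_distrib)

lemma Th_pow: "Th R z ^ n = (\<Prod>i\<in>UNIV. qf (fst z $ i / R) ^ n) * (\<Prod>j\<in>UNIV. qf (snd z $ j / R^2) ^ n)"
  by (simp add: Th_def power_mult_distrib prod_power_distrib)

lemma grushin_term_x:
  fixes z :: "('n::finite,'k::finite) pt"
  assumes m: "m \<ge> 3" and R: "R > 0"
  shows "\<bar>PF c ((HH m R)(a := HH2 m R a)) (HH m (R^2)) z\<bar> \<le> \<bar>c\<bar> * (48 * real m ^ 2 / R^2) * Th R z ^ (m - 2)"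
proof -
  let ?q = "\<lambda>i. qf (fst z $ i / R)"
  let ?r = "\<lambda>j. qf (snd z $ j / R^2)"
  have f: "\<bar>HH2 m R a (fst z $ a)\<bar> \<le> (48 * real m ^ 2 / R^2) * ?q a ^ (m - 2)"
    using gg2_bound[OF m, of "fst z $ a / R"] R by (simp add: HH2_def abs_divide field_simps)
  have A: "\<bar>(\<Prod>i\<in>UNIV-{a}. ?q i ^ m) * HH2 m R a (fst z $ a)\<bar> \<le> (48 * real m ^ 2 / R^2) * (\<Prod>i\<in>UNIV. ?q i ^ (m - 2))"
    by (rule prod_bound_upd[of ?q, OF qf_bounds(1) qf_bounds(2) f]) simp
  have B: "\<bar>\<Prod>j\<in>UNIV. ?r j ^ m\<bar> \<le> (\<Prod>j\<in>UNIV. ?r j ^ (m - 2))"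
    using qf_bounds by (auto simp: abs_prod intro!: prod_mono power_decreasing)
  have "PF c ((HH m R)(a := HH2 m R a)) (HH m (R^2)) z =
        c * ((\<Prod>i\<in>UNIV-{a}. ?q i ^ m) * HH2 m R a (fst z $ a)) * (\<Prod>j\<in>UNIV. ?r j ^ m)"
    by (simp add: PF_upd_x HH_def gg_eq)
  then have "\<bar>PF c ((HH m R)(a := HH2 m R a)) (HH m (R^2)) z\<bar> =
        \<bar>c\<bar> * \<bar>(\<Prod>i\<in>UNIV-{a}. ?q i ^ m) * HH2 m R a (fst z $ a)\<bar> * \<bar>\<Prod>j\<in>UNIV. ?r j ^ m\<bar>"
    by (simp add: abs_mult)
  also have "\<dots> \<le> \<bar>c\<bar> * ((48 * real m ^ 2 / R^2) * (\<Prod>i\<in>UNIV. ?q i ^ (m - 2))) * (\<Prod>j\<in>UNIV. ?r j ^ (m - 2))"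
  proof -
    have P: "0 \<le> (\<Prod>i\<in>UNIV. ?q i ^ (m - 2))" using qf_bounds by (intro prod_nonneg) auto
    have "0 \<le> \<bar>c\<bar> * ((48 * real m ^ 2 / R^2) * (\<Prod>i\<in>UNIV. ?q i ^ (m - 2)))"
      using P by simp
    then show ?thesis using A B by (intro mult_mono) auto
  qed
  also have "\<dots> = \<bar>c\<bar> * (48 * real m ^ 2 / R^2) * Th R z ^ (m - 2)"
    by (simp add: Th_pow)
  finally show ?thesis .
qed

lemma norm_sq_cart: "(norm (x :: real^'n))\<^sup>2 = (\<Sum>i\<in>UNIV. (x $ i)\<^sup>2)"
  by (simp add: norm_vec_def L2_set_def sum_nonneg)

lemma normsq_prod_bound:
  fixes x :: "real^'n"
  assumes m: "m \<ge> 3" and R: "R > 0"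
  shows "(norm x)\<^sup>2 * (\<Prod>i\<in>UNIV. qf (x $ i / R) ^ m) \<le> (4 * real CARD('n) * R^2) * (\<Prod>i\<in>UNIV. qf (x $ i / R) ^ (m - 2))"
proof (cases "\<exists>i. qf (x $ i / R) = 0")
  case True
  then obtain i where "qf (x $ i / R) = 0" by blast
  then have z: "(\<Prod>i\<in>UNIV. qf (x $ i / R) ^ m) = 0" using m by (intro prod_zero) (auto intro!: exI[of _ i])
  have "0 \<le> (\<Prod>i\<in>UNIV. qf (x $ i / R) ^ (m - 2))" using qf_bounds by (intro prod_nonneg) auto
  then show ?thesis unfolding z by simp
next
  case False
  have xi: "(x $ i)\<^sup>2 \<le> 4 * R^2" for i
  proof -
    have "\<bar>x $ i\<bar> < 2 * R" using False qf_zero_scaled[OF R, of "x $ i"] by force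
    then have "\<bar>x $ i\<bar>\<^sup>2 \<le> (2 * R)\<^sup>2" by (intro power_mono) auto
    then show ?thesis by (simp add: power_mult_distrib)
  qed
  have "(norm x)\<^sup>2 \<le> (\<Sum>i\<in>(UNIV::'n set). 4 * R^2)" unfolding norm_sq_cart by (rule sum_mono) (rule xi)
  then have n: "(norm x)\<^sup>2 \<le> 4 * real CARD('n) * R^2" by simp
  have p: "(\<Prod>i\<in>UNIV. qf (x $ i / R) ^ m) \<le> (\<Prod>i\<in>UNIV. qf (x $ i / R) ^ (m - 2))"
    using qf_bounds by (intro prod_mono) (auto intro: power_decreasing)
  show ?thesis using n p qf_bounds
    by (intro mult_mono) (auto intro!: prod_nonneg)
qed

lemma grushin_term_y:
  fixes z :: "('n::finite,'k::finite) pt"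
  assumes m: "m \<ge> 3" and R: "R > 0"
  shows "\<bar>(norm (fst z))\<^sup>2 * PF c (HH m R) ((HH m (R^2))(b := HH2 m (R^2) b)) z\<bar>
     \<le> \<bar>c\<bar> * (192 * real CARD('n) * real m ^ 2 / R^2) * Th R z ^ (m - 2)"
proof -
  let ?q = "\<lambda>i. qf (fst z $ i / R)"
  let ?r = "\<lambda>j. qf (snd z $ j / R^2)"
  have R2: "R^2 > 0" using R by simp
  have f: "\<bar>HH2 m (R^2) b (snd z $ b)\<bar> \<le> (48 * real m ^ 2 / (R^2)^2) * ?r b ^ (m - 2)"
    using gg2_bound[OF m, of "snd z $ b / R^2"] R2 by (simp add: HH2_def abs_divide field_simps)
  have A: "\<bar>(\<Prod>j\<in>UNIV-{b}. ?r j ^ m) * HH2 m (R^2) b (snd z $ b)\<bar> \<le> (48 * real m ^ 2 / (R^2)^2) * (\<Prod>j\<in>UNIV. ?r j ^ (m - 2))"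
    by (rule prod_bound_upd[of ?r, OF qf_bounds(1) qf_bounds(2) f]) simp
  have B: "(norm (fst z))\<^sup>2 * (\<Prod>i\<in>UNIV. ?q i ^ m) \<le> (4 * real CARD('n) * R^2) * (\<Prod>i\<in>UNIV. ?q i ^ (m - 2))"
    by (rule normsq_prod_bound[OF m R])
  have "(norm (fst z))\<^sup>2 * PF c (HH m R) ((HH m (R^2))(b := HH2 m (R^2) b)) z =
        c * ((norm (fst z))\<^sup>2 * (\<Prod>i\<in>UNIV. ?q i ^ m)) * ((\<Prod>j\<in>UNIV-{b}. ?r j ^ m) * HH2 m (R^2) b (snd z $ b))"
    by (simp add: PF_upd_y HH_def gg_eq)
  moreover have "\<bar>(norm (fst z))\<^sup>2 * (\<Prod>i\<in>UNIV. ?q i ^ m)\<bar> = (norm (fst z))\<^sup>2 * (\<Prod>i\<in>UNIV. ?q i ^ m)"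
    using qf_bounds by (intro abs_of_nonneg mult_nonneg_nonneg prod_nonneg) auto
  ultimately have "\<bar>(norm (fst z))\<^sup>2 * PF c (HH m R) ((HH m (R^2))(b := HH2 m (R^2) b)) z\<bar> =
        \<bar>c\<bar> * ((norm (fst z))\<^sup>2 * (\<Prod>i\<in>UNIV. ?q i ^ m)) * \<bar>(\<Prod>j\<in>UNIV-{b}. ?r j ^ m) * HH2 m (R^2) b (snd z $ b)\<bar>"
    by (simp only: abs_mult)
  also have "\<dots> \<le> \<bar>c\<bar> * ((4 * real CARD('n) * R^2) * (\<Prod>i\<in>UNIV. ?q i ^ (m - 2))) * ((48 * real m ^ 2 / (R^2)^2) * (\<Prod>j\<in>UNIV. ?r j ^ (m - 2)))"
  proof -
    have P: "0 \<le> (\<Prod>i\<in>UNIV. ?q i ^ (m - 2))" using qf_bounds by (intro prod_nonneg) auto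
    have P2: "0 \<le> (\<Prod>i\<in>UNIV. ?q i ^ m)" using qf_bounds by (intro prod_nonneg) auto
    have "0 \<le> \<bar>c\<bar> * ((4 * real CARD('n) * R^2) * (\<Prod>i\<in>UNIV. ?q i ^ (m - 2)))"
      using P by simp
    moreover have "0 \<le> \<bar>c\<bar> * ((norm (fst z))\<^sup>2 * (\<Prod>i\<in>UNIV. ?q i ^ m))" using P2 by simp
    moreover have "\<bar>c\<bar> * ((norm (fst z))\<^sup>2 * (\<Prod>i\<in>UNIV. ?q i ^ m)) \<le> \<bar>c\<bar> * ((4 * real CARD('n) * R^2) * (\<Prod>i\<in>UNIV. ?q i ^ (m - 2)))"
      by (rule mult_left_mono[OF B]) simp
    ultimately show ?thesis by (intro mult_mono[OF _ A]) auto
  qed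
  also have "\<dots> = \<bar>c\<bar> * (192 * real CARD('n) * real m ^ 2 / R^2) * Th R z ^ (m - 2)"
    using R by (simp add: Th_pow field_simps power2_eq_square)
  finally show ?thesis .
qed

lemma grushin_bound:
  fixes z :: "('n::finite,'k::finite) pt"
  assumes m: "m \<ge> 3" and R: "R > 0"
  shows "\<bar>grushin (PF c (HH m R) (HH m (R^2))) z\<bar> \<le>
     \<bar>c\<bar> * (48 * real m ^ 2 * (real CARD('n) + 4 * real CARD('n) * real CARD('k)) / R^2) * Th R z ^ (m - 2)"
proof -
  let ?B = "\<bar>c\<bar> * (48 * real m ^ 2 / R^2) * Th R z ^ (m - 2)"
  have R2: "R^2 > 0" using R by simp
  have g: "grushin (PF c (HH m R) (HH m (R^2))) z =
     (\<Sum>a\<in>UNIV. PF c ((HH m R)(a := HH2 m R a)) (HH m (R^2)) z)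
     + (\<Sum>b\<in>UNIV. (norm (fst z))\<^sup>2 * PF c (HH m R) ((HH m (R^2))(b := HH2 m (R^2) b)) z)"
    by (subst grushin_PF[OF HH_deriv[OF m R] HH1_deriv[OF m R] HH_deriv[OF m R2] HH1_deriv[OF m R2]])
       (simp add: sum_distrib_left)
  have s1: "\<bar>\<Sum>a\<in>UNIV. PF c ((HH m R)(a := HH2 m R a)) (HH m (R^2)) z\<bar> \<le> (\<Sum>a\<in>(UNIV::'n set). ?B)"
    by (rule order_trans[OF sum_abs sum_mono]) (rule grushin_term_x[OF m R])
  have s2: "\<bar>\<Sum>b\<in>UNIV. (norm (fst z))\<^sup>2 * PF c (HH m R) ((HH m (R^2))(b := HH2 m (R^2) b)) z\<bar>
      \<le> (\<Sum>b\<in>(UNIV::'k set). \<bar>c\<bar> * (192 * real CARD('n) * real m ^ 2 / R^2) * Th R z ^ (m - 2))"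
    by (rule order_trans[OF sum_abs sum_mono]) (rule grushin_term_y[OF m R])
  have "\<bar>grushin (PF c (HH m R) (HH m (R^2))) z\<bar> \<le> (\<Sum>a\<in>(UNIV::'n set). ?B) +
      (\<Sum>b\<in>(UNIV::'k set). \<bar>c\<bar> * (192 * real CARD('n) * real m ^ 2 / R^2) * Th R z ^ (m - 2))"
    unfolding g using s1 s2 abs_triangle_ineq by (smt (verit))
  also have "\<dots> = \<bar>c\<bar> * (48 * real m ^ 2 * (real CARD('n) + 4 * real CARD('n) * real CARD('k)) / R^2) * Th R z ^ (m - 2)"
    using R by (simp add: field_simps)
  finally show ?thesis .
qed

lemma grushin_zero:
  fixes z :: "('n::finite,'k::finite) pt"
  assumes m: "m \<ge> 3" and R: "R > 0" and x: "\<And>i. \<bar>fst z $ i\<bar> \<le> R" and y: "\<And>j. \<bar>snd z $ j\<bar> \<le> R^2"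
  shows "grushin (PF c (HH m R) (HH m (R^2))) z = 0"
proof -
  have R2: "R^2 > 0" using R by simp
  have "HH2 m R a (fst z $ a) = 0" for a
    using gg_plateau[OF m, of "fst z $ a / R"] x[of a] R by (simp add: HH2_def abs_divide)
  moreover have "HH2 m (R^2) b (snd z $ b) = 0" for b
    using gg_plateau[OF m, of "snd z $ b / R^2"] y[of b] R2 by (simp add: HH2_def abs_divide)
  ultimately show ?thesis
    by (subst grushin_PF[OF HH_deriv[OF m R] HH1_deriv[OF m R] HH_deriv[OF m R2] HH1_deriv[OF m R2]])
       (simp add: PF_upd_x PF_upd_y)
qed


lemma neg_integral_le:
  fixes f B :: "'a \<Rightarrow> real"
  assumes B: "integrable M B" and fB: "AE x in M. \<bar>f x\<bar> \<le> B x"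
  shows "- integral\<^sup>L M f \<le> integral\<^sup>L M B"
proof (cases "integrable M f")
  case True
  have "- integral\<^sup>L M f = integral\<^sup>L M (\<lambda>x. - f x)" by simp
  also have "\<dots> \<le> integral\<^sup>L M B"
    using True B fB by (intro integral_mono_AE) (auto elim!: eventually_mono)
  finally show ?thesis .
next
  case False
  then have "integral\<^sup>L M f = 0" by (simp add: not_integrable_integral_eq)
  moreover have "0 \<le> integral\<^sup>L M B"
    using fB by (intro integral_nonneg_AE) (auto elim!: eventually_mono)
  ultimately show ?thesis by simp
qed

lemma div_le_self_real: "0 \<le> (x::real) \<Longrightarrow> 1 \<le> p \<Longrightarrow> x / p \<le> x"
  using mult_left_mono[of 1 p x] by (simp add: divide_le_eq)

lemma Young_pt:
  fixes p U A \<Theta> \<delta> :: real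
  assumes p: "p > 1" and U: "U \<ge> 0" and A: "A \<ge> 0" and Th: "0 \<le> \<Theta>" "\<Theta> \<le> 1" and d: "\<delta> > 0"
    and m: "m \<ge> 3" "real m - 2 \<ge> real m / p"
  shows "U * A * \<Theta> ^ (m - 2) \<le> \<delta> * (U powr p * \<Theta> ^ m) + \<delta> powr (- 1 / (p - 1)) * A powr (p / (p - 1))"
proof (cases "\<Theta> = 0 \<or> U = 0 \<or> A = 0")
  case True
  have "0 \<le> \<delta> * (U powr p * \<Theta> ^ m) + \<delta> powr (- 1 / (p - 1)) * A powr (p / (p - 1))"
    using d Th by (intro add_nonneg_nonneg mult_nonneg_nonneg) auto
  moreover have "U * A * \<Theta> ^ (m - 2) = 0" using True m by auto
  ultimately show ?thesis by linarith
next
  case False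
  then have Tp: "\<Theta> > 0" and Up: "U > 0" and Ap: "A > 0" using Th U A by auto
  define q where "q = p / (p - 1)"
  have q: "q > 1" "1 / p + 1 / q = 1" using p by (auto simp: q_def field_simps)
  have "\<Theta> ^ (m - 2) = \<Theta> powr (real (m - 2))" using Tp by (simp add: powr_realpow)
  also have "\<dots> \<le> \<Theta> powr (real m / p)"
    using Tp Th m by (intro powr_mono') (auto simp: of_nat_diff)
  finally have T1: "\<Theta> ^ (m - 2) \<le> \<Theta> powr (real m / p)" .
  define a where "a = \<delta> powr (1 / p) * U * \<Theta> powr (real m / p)"
  define b where "b = \<delta> powr (- 1 / p) * A"
  have dd: "\<delta> powr (1 / p) * \<delta> powr (- 1 / p) = 1"
    using d by (simp add: powr_add[symmetric])
  have ab: "a * b = U * A * \<Theta> powr (real m / p)"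
    unfolding a_def b_def using dd by (simp add: algebra_simps)
  have a0: "a \<ge> 0" and b0: "b \<ge> 0" using U A by (auto simp: a_def b_def)
  have Y: "a * b \<le> a powr p / p + b powr q / q"
    by (rule Youngs_inequality[OF p q(1) q(2) a0 b0])
  have ap: "a powr p = \<delta> * (U powr p * \<Theta> ^ m)"
    using d Up Tp p by (simp add: a_def powr_mult powr_powr powr_realpow)
  have bq: "b powr q = \<delta> powr (- 1 / (p - 1)) * A powr (p / (p - 1))"
    using d Ap p by (simp add: b_def q_def powr_mult powr_powr field_simps)
  have "a powr p / p \<le> a powr p" using p by (intro div_le_self_real) auto
  moreover have "b powr q / q \<le> b powr q" using q by (intro div_le_self_real) auto
  ultimately have "a * b \<le> a powr p + b powr q" using Y by linarith
  moreover have "U * A * \<Theta> ^ (m - 2) \<le> a * b" unfolding ab using T1 U A by (intro mult_left_mono) auto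
  ultimately show ?thesis unfolding ap bq by linarith
qed

lemma L1loc_int:
  fixes f :: "'a::euclidean_space \<Rightarrow> real"
  assumes L: "L1_loc S f" and K: "compact K" "K \<subseteq> S" and g: "g \<in> borel_measurable lborel"
    and gC: "\<And>w. \<bar>g w\<bar> \<le> C" and g0: "\<And>w. w \<notin> K \<Longrightarrow> g w = 0"
  shows "integrable lborel (\<lambda>w. f w * g w)"
proof -
  have si: "integrable lborel (\<lambda>x. indicator K x *\<^sub>R f x)"
    using L K unfolding L1_loc_def set_integrable_def by blast
  have eq: "f w * g w = (indicator K w *\<^sub>R f w) * g w" for w
    using g0[of w] by (cases "w \<in> K") auto
  have C0: "0 \<le> C" using gC[of undefined] by linarith
  have i1: "integrable lborel (\<lambda>x. C * (indicator K x *\<^sub>R f x))" using si by simp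
  have m1: "(\<lambda>x. indicator K x *\<^sub>R f x * g x) \<in> borel_measurable lborel"
    using borel_measurable_integrable[OF si] g by measurable
  have a1: "AE x in lborel. norm (indicator K x *\<^sub>R f x * g x) \<le> norm (C * (indicator K x *\<^sub>R f x))"
  proof (intro AE_I2)
    fix x
    have "indicator K x * \<bar>f x\<bar> * \<bar>g x\<bar> \<le> indicator K x * \<bar>f x\<bar> * C"
      by (rule mult_left_mono[OF gC]) simp
    then show "norm (indicator K x *\<^sub>R f x * g x) \<le> norm (C * (indicator K x *\<^sub>R f x))"
      using C0 by (simp add: abs_mult mult_ac)
  qed
  show ?thesis unfolding eq by (rule Bochner_Integration.integrable_bound[OF i1 m1 a1])
qed

lemma prod_Basis_prod_eq:
  fixes f::"('a::euclidean_space * 'b::euclidean_space) \<Rightarrow> real"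
  shows "prod f Basis = prod (\<lambda>i. f (i, 0)) Basis * prod (\<lambda>i. f (0, i)) Basis"
proof -
  have "inj_on (\<lambda>u. (u::'a, 0::'b)) Basis" "inj_on (\<lambda>u. (0::'a, u::'b)) Basis"
    by (auto intro!: inj_onI Pair_inject)
  thus ?thesis
    unfolding Basis_prod_def
    by (subst prod.union_disjoint) (auto simp: Basis_prod_def prod.reindex)
qed

definition BU :: "real \<Rightarrow> ('n::finite,'k::finite) pt \<times> real" where
  "BU R = (((2 * R) *\<^sub>R One, (2 * R^2) *\<^sub>R One), 2 * R^2)"

definition BX :: "real \<Rightarrow> (('n::finite,'k::finite) pt \<times> real) set" where
  "BX R = cbox (- BU R) (BU R)"

lemma BU_inner1: "u \<in> Basis \<Longrightarrow> BU R \<bullet> (((u, 0), 0) :: ('n::finite,'k::finite) pt \<times> real) = 2 * R"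
  unfolding BU_def inner_Pair by (simp only: inner_scaleR_left inner_sum_Basis) simp
lemma BU_inner2: "v \<in> Basis \<Longrightarrow> BU R \<bullet> (((0, v), 0) :: ('n::finite,'k::finite) pt \<times> real) = 2 * R^2"
  unfolding BU_def inner_Pair by (simp only: inner_scaleR_left inner_sum_Basis) simp
lemma BU_inner3: "BU R \<bullet> ((0, 1) :: ('n::finite,'k::finite) pt \<times> real) = 2 * R^2"
  unfolding BU_def inner_Pair by simp
lemmas BU_inner = BU_inner1 BU_inner2 BU_inner3

lemma measure_BX:
  assumes "R \<ge> 0"
  shows "measure lborel (BX R :: (('n::finite,'k::finite) pt \<times> real) set) =
    (4 * R) ^ CARD('n) * (4 * R^2) ^ CARD('k) * (4 * R^2)"
proof -
  have le: "(- BU R) \<bullet> b \<le> (BU R :: ('n,'k) pt \<times> real) \<bullet> b" if "b \<in> Basis" for b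
    using that assms by (auto simp: Basis_prod_def BU_inner inner_minus_left)
  have "measure lborel (BX R :: (('n,'k) pt \<times> real) set) = (\<Prod>b\<in>Basis. (BU R :: ('n,'k) pt \<times> real) \<bullet> b - (- BU R) \<bullet> b)"
    unfolding BX_def using le by (subst content_cbox) auto
  also have "\<dots> = (\<Prod>b\<in>Basis. 2 * ((BU R :: ('n,'k) pt \<times> real) \<bullet> b))"
    by (intro prod.cong refl) (simp add: inner_minus_left)
  also have "\<dots> = (4 * R) ^ CARD('n) * (4 * R^2) ^ CARD('k) * (4 * R^2)"
    unfolding prod_Basis_prod_eq by (simp add: BU_inner)
  finally show ?thesis .
qed


lemma fatou_real:
  fixes f :: "nat \<Rightarrow> 'a \<Rightarrow> real"
  assumes fi: "\<And>n. integrable M (f n)" and f0: "\<And>n. AE x in M. 0 \<le> f n x"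
    and fB: "\<And>n. integral\<^sup>L M (f n) \<le> B"
    and lim: "\<And>x. x \<in> space M \<Longrightarrow> (\<lambda>n. f n x) \<longlonglongrightarrow> g x"
  shows "integrable M g"
proof -
  have gm: "g \<in> borel_measurable M"
    by (rule borel_measurable_LIMSEQ_real[OF lim]) (use fi in auto)
  have g0: "AE x in M. 0 \<le> g x"
  proof -
    have "AE x in M. \<forall>n. 0 \<le> f n x" using f0 by (simp add: AE_all_countable)
    then show ?thesis
    proof (rule AE_mp[OF _ AE_I2], intro impI)
      fix x assume x: "x \<in> space M" "\<forall>n. 0 \<le> f n x"
      show "0 \<le> g x" by (rule LIMSEQ_le_const[OF lim[OF x(1)]]) (use x(2) in auto)
    qed
  qed
  have "(\<integral>\<^sup>+ x. ennreal (g x) \<partial>M) = (\<integral>\<^sup>+ x. liminf (\<lambda>n. ennreal (f n x)) \<partial>M)"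
  proof (rule nn_integral_cong)
    fix x assume "x \<in> space M"
    then have "(\<lambda>n. ennreal (f n x)) \<longlonglongrightarrow> ennreal (g x)"
      by (intro tendsto_ennrealI lim)
    then show "ennreal (g x) = liminf (\<lambda>n. ennreal (f n x))"
      by (simp add: lim_imp_Liminf)
  qed
  also have "\<dots> \<le> liminf (\<lambda>n. \<integral>\<^sup>+ x. ennreal (f n x) \<partial>M)"
    by (rule nn_integral_liminf) (use fi in auto)
  also have "\<dots> \<le> limsup (\<lambda>n. \<integral>\<^sup>+ x. ennreal (f n x) \<partial>M)"
    by (rule Liminf_le_Limsup) simp
  also have "\<dots> \<le> ennreal B"
  proof (rule Limsup_bounded, rule always_eventually, intro allI)
    fix n
    have "(\<integral>\<^sup>+ x. ennreal (f n x) \<partial>M) = ennreal (integral\<^sup>L M (f n))"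
      by (rule nn_integral_eq_integral[OF fi f0])
    also have "\<dots> \<le> ennreal B" using fB[of n] by (rule ennreal_leI)
    finally show "(\<integral>\<^sup>+ x. ennreal (f n x) \<partial>M) \<le> ennreal B" .
  qed
  finally have fin: "(\<integral>\<^sup>+ x. ennreal (g x) \<partial>M) < \<infinity>" by (metis ennreal_less_top infinity_ennreal_def le_less_trans)
  show ?thesis
  proof (rule integrableI_bounded[OF gm])
    have "(\<integral>\<^sup>+ x. ennreal (norm (g x)) \<partial>M) = (\<integral>\<^sup>+ x. ennreal (g x) \<partial>M)"
      using g0 by (intro nn_integral_cong_AE) (auto elim!: eventually_mono)
    then show "(\<integral>\<^sup>+ x. ennreal (norm (g x)) \<partial>M) < \<infinity>" using fin by simp
  qed
qed

lemma cont_meas: "continuous_on UNIV f \<Longrightarrow> f \<in> borel_measurable lborel"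
  by (simp add: borel_measurable_continuous_onI)

lemma ball_Basis_prod: "(\<forall>b\<in>(Basis :: ('a::euclidean_space \<times> 'b::euclidean_space) set). P b) \<longleftrightarrow>
   (\<forall>u\<in>Basis. P (u, 0)) \<and> (\<forall>v\<in>Basis. P (0, v))"
  by (auto simp: Basis_prod_def)

lemma ball_Basis_cart: "(\<forall>b\<in>(Basis :: (real^'n) set). P b) \<longleftrightarrow> (\<forall>i. P (axis i 1))"
  by (auto simp: Basis_cart_eq)

lemma One_nth_cart[simp]: "(One :: real^'n) $ i = 1"
proof -
  have b: "axis i (1::real) \<in> Basis" by simp
  have "(One :: real^'n) \<bullet> axis i 1 = 1" by (rule inner_sum_Basis[OF b])
  then show ?thesis by (simp add: inner_axis)
qed

lemma sum_Basis_nth[simp]: "(\<Sum>x\<in>(Basis::(real^'n) set). x $ i) = 1"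
  by (simp add: sum_Basis_cart axis_def)

lemma mem_cbox_U:
  fixes w :: "('n::finite,'k::finite) pt \<times> real"
  shows "w \<in> cbox (- (((a *\<^sub>R One, b *\<^sub>R One), c))) (((a *\<^sub>R One, b *\<^sub>R One), c)) \<longleftrightarrow>
    (\<forall>i. \<bar>fst (fst w) $ i\<bar> \<le> a) \<and> (\<forall>j. \<bar>snd (fst w) $ j\<bar> \<le> b) \<and> \<bar>snd w\<bar> \<le> c"
proof -
  obtain x y t where w: "w = ((x, y), t)" by (metis prod.collapse)
  show ?thesis
    unfolding w mem_box ball_Basis_prod ball_Basis_cart
    by (simp add: inner_Pair inner_axis abs_le_iff inner_minus_left) (auto simp: minus_le_iff)
qed


definition ctR :: "nat \<Rightarrow> real \<Rightarrow> real \<Rightarrow> real" where "ctR m R t = gg m (t / R^2)"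
definition ct1R :: "nat \<Rightarrow> real \<Rightarrow> real \<Rightarrow> real" where "ct1R m R t = gg1 m (t / R^2) / R^2"
definition hE :: "nat \<Rightarrow> real \<Rightarrow> real \<Rightarrow> real" where "hE m e t = 1 - gg m (t / e)"
definition hE1 :: "nat \<Rightarrow> real \<Rightarrow> real \<Rightarrow> real" where "hE1 m e t = - (gg1 m (t / e) / e)"
definition ce :: "nat \<Rightarrow> real \<Rightarrow> real \<Rightarrow> real \<Rightarrow> real" where "ce m R e t = ctR m R t * hE m e t"
definition ce1 :: "nat \<Rightarrow> real \<Rightarrow> real \<Rightarrow> real \<Rightarrow> real" where
  "ce1 m R e t = ct1R m R t * hE m e t + ctR m R t * hE1 m e t"
definition phiT :: "nat \<Rightarrow> real \<Rightarrow> (real \<Rightarrow> real) \<Rightarrow> ('n::finite,'k::finite) pt \<Rightarrow> real \<Rightarrow> real" where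
  "phiT m R c = (\<lambda>z t. PF (c t) (HH m R) (HH m (R^2)) z)"

lemma ctR_deriv: "m \<ge> 3 \<Longrightarrow> R > 0 \<Longrightarrow> (ctR m R has_real_derivative ct1R m R t) (at t)"
  unfolding ctR_def[abs_def] ct1R_def using scaled_deriv[OF _ gg_deriv, of "R^2" m t] by simp

lemma hE_deriv: "m \<ge> 3 \<Longrightarrow> e > 0 \<Longrightarrow> (hE m e has_real_derivative hE1 m e t) (at t)"
proof -
  assume m: "m \<ge> 3" and e: "e > 0"
  have "((\<lambda>t. 1 - gg m (t / e)) has_real_derivative 0 - gg1 m (t / e) / e) (at t)"
    by (intro derivative_intros scaled_deriv[OF _ gg_deriv[OF m]]) (use e in auto)
  then show ?thesis unfolding hE_def[abs_def] hE1_def by simp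
qed

lemma ce_deriv: "m \<ge> 3 \<Longrightarrow> R > 0 \<Longrightarrow> e > 0 \<Longrightarrow> (ce m R e has_real_derivative ce1 m R e t) (at t)"
proof -
  assume m: "m \<ge> 3" and R: "R > 0" and e: "e > 0"
  have "((\<lambda>t. ctR m R t * hE m e t) has_real_derivative ct1R m R t * hE m e t + ctR m R t * hE1 m e t) (at t)"
    using DERIV_mult[OF ctR_deriv[OF m R] hE_deriv[OF m e]] by (simp add: algebra_simps)
  then show ?thesis unfolding ce_def[abs_def] ce1_def by simp
qed

lemma cont_ct1R: "R > 0 \<Longrightarrow> continuous_on UNIV (ct1R m R)"
  unfolding ct1R_def[abs_def] by (intro continuous_intros) auto
lemma cont_ctR: "R > 0 \<Longrightarrow> continuous_on UNIV (ctR m R)"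
  unfolding ctR_def[abs_def] by (intro continuous_intros) auto
lemma cont_ce1: "R > 0 \<Longrightarrow> e > 0 \<Longrightarrow> continuous_on UNIV (ce1 m R e)"
  unfolding ce1_def[abs_def] ct1R_def ctR_def hE_def hE1_def by (intro continuous_intros) auto
lemma cont_ce: "R > 0 \<Longrightarrow> e > 0 \<Longrightarrow> continuous_on UNIV (ce m R e)"
  unfolding ce_def[abs_def] ctR_def hE_def by (intro continuous_intros) auto

lemma gg_3: "m \<ge> 3 \<Longrightarrow> gg m 3 = 0"
  using qf_zero[of 3] by (simp add: gg_eq)

lemma test_fun_phiT:
  assumes m: "m \<ge> 3" and R: "R > 0"
    and dc: "\<And>s. (c has_real_derivative c1 s) (at s)" and cc1: "continuous_on UNIV c1"
    and c3: "c (3 * R^2) = 0"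
  shows "test_fun (3 * R^2) (phiT m R c :: ('n::finite,'k::finite) pt \<Rightarrow> real \<Rightarrow> real)"
proof -
  have R2: "R^2 > 0" using R by simp
  show ?thesis unfolding phiT_def
  proof (rule test_fun_PF[where r = "2 * R + 2 * R^2"])
    show "fam_deriv (HH m R) (HH1 m R :: 'n \<Rightarrow> _)" by (rule HH_deriv[OF m R])
    show "fam_deriv (HH1 m R) (HH2 m R :: 'n \<Rightarrow> _)" by (rule HH1_deriv[OF m R])
    show "fam_deriv (HH m (R^2)) (HH1 m (R^2) :: 'k \<Rightarrow> _)" by (rule HH_deriv[OF m R2])
    show "fam_deriv (HH1 m (R^2)) (HH2 m (R^2) :: 'k \<Rightarrow> _)" by (rule HH1_deriv[OF m R2])
    show "fam_cont (HH m R :: 'n \<Rightarrow> _)" "fam_cont (HH1 m R :: 'n \<Rightarrow> _)" "fam_cont (HH2 m R :: 'n \<Rightarrow> _)"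
      using HH_cont[OF R] by auto
    show "fam_cont (HH m (R^2) :: 'k \<Rightarrow> _)" "fam_cont (HH1 m (R^2) :: 'k \<Rightarrow> _)" "fam_cont (HH2 m (R^2) :: 'k \<Rightarrow> _)"
      using HH_cont[OF R2] by auto
    show "(c has_real_derivative c1 s) (at s)" for s by (rule dc)
    show "continuous_on UNIV c1" by (rule cc1)
    show "HH m R i s = 0" if "2 * R + 2 * R^2 \<le> \<bar>s\<bar>" for i s
      by (rule HH_supp[OF m R]) (use that R2 in linarith)
    show "HH m (R^2) j s = 0" if "2 * R + 2 * R^2 \<le> \<bar>s\<bar>" for j s
      by (rule HH_supp[OF m R2]) (use that R in linarith)
    show "0 < 3 * R^2" using R2 by simp
    show "c (3 * R^2) = 0" by (rule c3)
  qed
qed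

lemma test_fun_main:
  "m \<ge> 3 \<Longrightarrow> R > 0 \<Longrightarrow> test_fun (3 * R^2) (phiT m R (ctR m R) :: ('n::finite,'k::finite) pt \<Rightarrow> real \<Rightarrow> real)"
  by (rule test_fun_phiT[OF _ _ ctR_deriv cont_ct1R]) (auto simp: ctR_def gg_3)

lemma test_fun_eps:
  "m \<ge> 3 \<Longrightarrow> R > 0 \<Longrightarrow> e > 0 \<Longrightarrow> test_fun (3 * R^2) (phiT m R (ce m R e) :: ('n::finite,'k::finite) pt \<Rightarrow> real \<Rightarrow> real)"
  by (rule test_fun_phiT[OF _ _ ce_deriv cont_ce1]) (auto simp: ce_def ctR_def gg_3)

lemma dtime_phiT:
  assumes "\<And>s. (c has_real_derivative c1 s) (at s)" "R > 0" "t \<in> {0..3 * R^2}"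
  shows "dtime (3 * R^2) (phiT m R c) z t = c1 t * Th R z ^ m"
  unfolding phiT_def using assms(2)
  by (subst dtime_PF[OF assms(1) _ assms(3)]) (simp_all add: PF_Th)

lemma phiT_eq: "phiT m R c z t = c t * Th R z ^ m"
  by (simp add: phiT_def PF_Th)

lemma grushin_phiT: "grushin (\<lambda>z. phiT m R c z t) = grushin (PF (c t) (HH m R) (HH m (R^2)))"
  by (simp add: phiT_def)


definition WW :: "real \<Rightarrow> (('n::finite,'k::finite) pt \<times> real) set" where "WW T = UNIV \<times> {0<..<T}"
definition Psi :: "real \<Rightarrow> ('n::finite,'k::finite) pt \<times> real \<Rightarrow> real" where
  "Psi R w = qf (snd w / R^2) * Th R (fst w)"
definition PU :: "real \<Rightarrow> ('n::finite,'k::finite) pt \<times> real" where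
  "PU R = ((R *\<^sub>R One, (R^2) *\<^sub>R One), R^2)"
definition PB :: "real \<Rightarrow> (('n::finite,'k::finite) pt \<times> real) set" where
  "PB R = cbox (- PU R) (PU R)"

lemma Psi_bounds: "0 \<le> Psi R w" "Psi R w \<le> 1"
  unfolding Psi_def using qf_bounds[of "snd w / R^2"] Th_bounds[of R "fst w"] by (auto intro: mult_le_one)

lemma Psi_pow: "Psi R w ^ n = qf (snd w / R^2) ^ n * Th R (fst w) ^ n"
  by (simp add: Psi_def power_mult_distrib)

lemma WW_open: "open (WW T)" unfolding WW_def by (intro open_Times) auto
lemma WW_sets[measurable]: "WW T \<in> sets lborel"
  using borel_open[OF WW_open] by simp

lemma PB_sets[measurable]: "PB R \<in> sets lborel" unfolding PB_def by simp
lemma BX_sets[measurable]: "BX R \<in> sets lborel" unfolding BX_def by simp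

lemma Psi_nz_BX:
  assumes R: "R > 0" and nz: "Psi R w \<noteq> 0"
  shows "w \<in> BX R"
proof -
  have R2: "R^2 > 0" using R by simp
  have q: "qf (snd w / R^2) \<noteq> 0" and T: "Th R (fst w) \<noteq> 0" using nz by (auto simp: Psi_def)
  have t: "\<bar>snd w\<bar> \<le> 2 * R^2" using q qf_zero_scaled[OF R2, of "snd w"] by force
  have x: "\<bar>fst (fst w) $ i\<bar> \<le> 2 * R" for i
  proof (rule ccontr)
    assume "\<not> ?thesis"
    then have "qf (fst (fst w) $ i / R) = 0" using qf_zero_scaled[OF R] by force
    then have "(\<Prod>i\<in>UNIV. qf (fst (fst w) $ i / R)) = 0" by (intro prod_zero) auto
    then show False using T by (simp add: Th_def)
  qed
  have y: "\<bar>snd (fst w) $ j\<bar> \<le> 2 * R^2" for j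
  proof (rule ccontr)
    assume "\<not> ?thesis"
    then have "qf (snd (fst w) $ j / R^2) = 0" using qf_zero_scaled[OF R2] by force
    then have "(\<Prod>j\<in>UNIV. qf (snd (fst w) $ j / R^2)) = 0" by (intro prod_zero) auto
    then show False using T by (simp add: Th_def)
  qed
  show ?thesis unfolding BX_def BU_def mem_cbox_U using x y t by auto
qed

lemma PB_mem:
  "w \<in> PB R \<longleftrightarrow> (\<forall>i. \<bar>fst (fst w) $ i\<bar> \<le> R) \<and> (\<forall>j. \<bar>snd (fst w) $ j\<bar> \<le> R^2) \<and> \<bar>snd w\<bar> \<le> R^2"
  unfolding PB_def PU_def mem_cbox_U by simp

lemma Th_one: "R > 0 \<Longrightarrow> (\<forall>i. \<bar>fst z $ i\<bar> \<le> R) \<Longrightarrow> (\<forall>j. \<bar>snd z $ j\<bar> \<le> R^2) \<Longrightarrow> Th R z = 1"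
  unfolding Th_def using PP_small by (auto simp: qf_def abs_divide divide_le_eq_1 intro!: prod.neutral)


definition CG :: "nat \<Rightarrow> ('n::finite \<times> 'k::finite) itself \<Rightarrow> real" where
  "CG m _ = 48 * real m ^ 2 * (real CARD('n) + 4 * real CARD('n) * real CARD('k))"

lemma CG_nonneg: "CG m TYPE('n::finite \<times> 'k::finite) \<ge> 0" by (simp add: CG_def)

lemma grushin_bound':
  fixes z :: "('n::finite,'k::finite) pt"
  assumes m: "m \<ge> 3" and R: "R > 0"
  shows "\<bar>grushin (PF c (HH m R) (HH m (R^2))) z\<bar> \<le> \<bar>c\<bar> * (CG m TYPE('n \<times> 'k) / R^2) * Th R z ^ (m - 2)"
  using grushin_bound[OF m R, of c z] by (simp add: CG_def)

lemma ctR_le: "m \<ge> 3 \<Longrightarrow> \<bar>ctR m R t\<bar> \<le> qf (t / R^2) ^ (m - 2)"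
  using qf_bounds[of "t / R^2"] gg_bounds[of m "t / R^2"]
  by (simp add: ctR_def gg_eq power_decreasing)

lemma hE_bounds: "0 \<le> hE m e t" "hE m e t \<le> 1"
  using gg_bounds[of m "t / e"] by (auto simp: hE_def)

lemma ce_le: "m \<ge> 3 \<Longrightarrow> \<bar>ce m R e t\<bar> \<le> qf (t / R^2) ^ (m - 2) * hE m e t"
  using ctR_le[of m R t] hE_bounds[of m e t]
  by (simp add: ce_def abs_mult mult_right_mono)

lemma ct1R_le: "m \<ge> 3 \<Longrightarrow> R > 0 \<Longrightarrow> \<bar>ct1R m R t\<bar> \<le> (48 * real m ^ 2 / R^2) * qf (t / R^2) ^ (m - 2)"
  using gg1_bound[of m "t / R^2"] by (simp add: ct1R_def abs_divide field_simps)

lemma Th_pow_le: "m \<ge> 3 \<Longrightarrow> Th R z ^ m \<le> Th R z ^ (m - 2)"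
  using Th_bounds[of R z] by (intro power_decreasing) auto

lemma ct1R_zero: "m \<ge> 3 \<Longrightarrow> R > 0 \<Longrightarrow> 0 \<le> t \<Longrightarrow> t \<le> R^2 \<Longrightarrow> ct1R m R t = 0"
  using gg_plateau[of m "t / R^2"] by (simp add: ct1R_def abs_divide divide_le_eq_1)

lemma hE1_nonneg: "m \<ge> 3 \<Longrightarrow> e > 0 \<Longrightarrow> 0 \<le> t \<Longrightarrow> 0 \<le> hE1 m e t"
  using gg1_nonpos[of m "t / e"] by (simp add: hE1_def divide_nonpos_pos)

lemma young_ind:
  fixes w :: "('n::finite,'k::finite) pt \<times> real"
  assumes p: "p > 1" and m: "m \<ge> 3" "real m - 2 \<ge> real m / p" and U: "U \<ge> 0" and A: "A \<ge> 0"
    and d: "\<delta> > 0" and R: "R > 0"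
  shows "U * A * Psi R w ^ (m - 2) \<le> \<delta> * (U powr p * Psi R w ^ m)
          + \<delta> powr (- 1 / (p - 1)) * A powr (p / (p - 1)) * indicator (BX R) w"
proof (cases "Psi R w = 0")
  case True
  have "0 \<le> \<delta> * (U powr p * Psi R w ^ m) + \<delta> powr (- 1 / (p - 1)) * A powr (p / (p - 1)) * indicator (BX R) w"
    using d Psi_bounds[of R w] by (intro add_nonneg_nonneg mult_nonneg_nonneg) auto
  moreover have "U * A * Psi R w ^ (m - 2) = 0" using True m by simp
  ultimately show ?thesis by linarith
next
  case False
  then have "w \<in> BX R" using Psi_nz_BX[OF R] by blast
  then show ?thesis using Young_pt[OF p U A Psi_bounds d m] by simp
qed


lemma compact_KK: "compact (BX R \<inter> (UNIV \<times> {e..}) :: (('n::finite,'k::finite) pt \<times> real) set)"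
  unfolding BX_def by (intro compact_Int_closed compact_cbox closed_Times) auto

lemma KK_sub: 
  assumes "R > 0" "e > 0"
  shows "BX R \<inter> (UNIV \<times> {e..}) \<subseteq> (WW (3 * R^2) :: (('n::finite,'k::finite) pt \<times> real) set)"
proof
  fix w :: "('n,'k) pt \<times> real" assume w: "w \<in> BX R \<inter> (UNIV \<times> {e..})"
  then have "\<bar>snd w\<bar> \<le> 2 * R^2" unfolding BX_def BU_def mem_cbox_U by auto
  moreover have "snd w \<ge> e" using w by auto
  ultimately show "w \<in> WW (3 * R^2)" using assms by (auto simp: WW_def mem_Times_iff)
qed

lemma PF_cont_w:
  fixes h :: "'n::finite \<Rightarrow> real \<Rightarrow> real" and k :: "'k::finite \<Rightarrow> real \<Rightarrow> real" and c :: "real \<Rightarrow> real"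
  assumes "continuous_on UNIV c" "fam_cont h" "fam_cont k"
  shows "continuous_on UNIV (\<lambda>w. PF (c (snd w)) h k (fst w))"
proof -
  have "continuous_on (UNIV \<times> UNIV) (\<lambda>(z, t). PF (c t) h k z)"
    by (rule PF_cont[OF assms(1)]) (auto intro: fam_contD assms)
  then show ?thesis by (simp add: case_prod_beta')
qed

lemma grushin_meas:
  fixes c :: "real \<Rightarrow> real"
  assumes m: "m \<ge> 3" and R: "R > 0" and c: "continuous_on UNIV c"
  shows "(\<lambda>w. grushin (PF (c (snd w)) (HH m R) (HH m (R^2))) (fst w) :: real) \<in> borel_measurable lborel"
proof -
  have R2: "R^2 > 0" using R by simp
  let ?H = "HH m R :: 'n::finite \<Rightarrow> real \<Rightarrow> real" and ?K = "HH m (R^2) :: 'k::finite \<Rightarrow> real \<Rightarrow> real"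
  have eq: "grushin (PF (c (snd w)) ?H ?K) (fst w) =
     (\<Sum>a\<in>UNIV. PF (c (snd w)) (?H(a := HH2 m R a)) ?K (fst w))
           + (norm (fst (fst w)))\<^sup>2 * (\<Sum>b\<in>UNIV. PF (c (snd w)) ?H (?K(b := HH2 m (R^2) b)) (fst w))" for w
    by (rule grushin_PF[OF HH_deriv[OF m R] HH1_deriv[OF m R] HH_deriv[OF m R2] HH1_deriv[OF m R2]])
  have "continuous_on UNIV (\<lambda>w. (\<Sum>a\<in>UNIV. PF (c (snd w)) (?H(a := HH2 m R a)) ?K (fst w))
           + (norm (fst (fst w)))\<^sup>2 * (\<Sum>b\<in>UNIV. PF (c (snd w)) ?H (?K(b := HH2 m (R^2) b)) (fst w)))"
    using HH_cont[OF R, of m] HH_cont[OF R2, of m]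
    by (intro continuous_intros PF_cont_w[OF c] fam_cont_upd fam_contD) auto
  then show ?thesis unfolding eq by (rule cont_meas)
qed



lemma cont_qf[continuous_intros]: "continuous_on S f \<Longrightarrow> continuous_on S (\<lambda>x. qf (f x))"
  unfolding qf_def by (intro continuous_intros)

lemma Th_cont: "R > 0 \<Longrightarrow> continuous_on UNIV (\<lambda>w. Th R (fst w :: ('n::finite,'k::finite) pt))"
  unfolding Th_def by (intro continuous_intros) auto

context
  fixes u0 :: "('n::finite,'k::finite) pt \<Rightarrow> real" and p :: real
    and u :: "('n,'k) pt \<Rightarrow> real \<Rightarrow> real" and m :: nat
  assumes p: "p > 1" and gws: "global_weak_solution p u0 u"
    and pos: "AE w in lborel. snd w > 0 \<longrightarrow> u (fst w) (snd w) \<ge> 0"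
    and m: "m \<ge> 3" "real m - 2 \<ge> real m / p"
begin

lemma ws: "T > 0 \<Longrightarrow> weak_solution T p u0 u"
  using gws by (simp add: global_weak_solution_def)

lemma L1u: "T > 0 \<Longrightarrow> L1_loc (WW T) (\<lambda>(z, t). u z t)"
  using ws by (simp add: weak_solution_def WW_def)

lemma L1v: "T > 0 \<Longrightarrow> L1_loc (WW T) (\<lambda>(z, t). \<bar>u z t\<bar> powr (p - 1) * u z t)"
  using ws by (simp add: weak_solution_def WW_def)

lemma AE_pos: "AE w in lborel. snd w > 0 \<longrightarrow> u (fst w) (snd w) \<ge> 0 \<and>
   \<bar>u (fst w) (snd w)\<bar> powr (p - 1) * u (fst w) (snd w) = u (fst w) (snd w) powr p"
  using pos
proof (rule AE_mp[OF _ AE_I2], intro impI)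
  fix w :: "('n,'k) pt \<times> real"
  assume "snd w > 0 \<longrightarrow> u (fst w) (snd w) \<ge> 0" "snd w > 0"
  then have u: "u (fst w) (snd w) \<ge> 0" by auto
  have "\<bar>u (fst w) (snd w)\<bar> powr (p - 1) * u (fst w) (snd w) = u (fst w) (snd w) powr p"
  proof (cases "u (fst w) (snd w) = 0")
    case True then show ?thesis by simp
  next
    case False
    then have up: "u (fst w) (snd w) > 0" using u by simp
    have "u (fst w) (snd w) powr p = u (fst w) (snd w) powr ((p - 1) + 1)" by simp
    also have "\<dots> = u (fst w) (snd w) powr (p - 1) * u (fst w) (snd w) powr 1" by (rule powr_add)
    also have "\<dots> = u (fst w) (snd w) powr (p - 1) * u (fst w) (snd w)" using up by simp
    finally show ?thesis using up by simp
  qed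
  then show "u (fst w) (snd w) \<ge> 0 \<and> \<bar>u (fst w) (snd w)\<bar> powr (p - 1) * u (fst w) (snd w) = u (fst w) (snd w) powr p"
    using u by simp
qed

lemma int_KK:
  assumes R: "R > 0" and e: "e > 0" and g: "g \<in> borel_measurable lborel" and gC: "\<And>w. \<bar>g w\<bar> \<le> C"
    and g0: "\<And>w. \<not> (w \<in> BX R \<and> e \<le> snd w) \<Longrightarrow> g w = 0"
  shows "integrable lborel (\<lambda>w. u (fst w) (snd w) * g w)"
    and "integrable lborel (\<lambda>w. \<bar>u (fst w) (snd w)\<bar> powr (p - 1) * u (fst w) (snd w) * g w)"
proof -
  have T: "3 * R^2 > 0" using R by simp
  have g0': "g w = 0" if "w \<notin> BX R \<inter> (UNIV \<times> {e..})" for w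
    using g0 that by (auto simp: mem_Times_iff)
  show "integrable lborel (\<lambda>w. u (fst w) (snd w) * g w)"
    using L1loc_int[OF L1u[OF T] compact_KK KK_sub[OF R e] g gC g0'] by (simp add: case_prod_beta)
  show "integrable lborel (\<lambda>w. \<bar>u (fst w) (snd w)\<bar> powr (p - 1) * u (fst w) (snd w) * g w)"
    using L1loc_int[OF L1v[OF T] compact_KK KK_sub[OF R e] g gC g0'] by (simp add: case_prod_beta)
qed

lemma eps_identity:
  assumes R: "R > 0" and e: "e > 0"
  shows "0 = integral\<^sup>L lborel (\<lambda>w. \<bar>u (fst w) (snd w)\<bar> powr (p - 1) * u (fst w) (snd w) *
                 (indicator (WW (3 * R^2)) w * (ce m R e (snd w) * Th R (fst w) ^ m)))
           + integral\<^sup>L lborel (\<lambda>w. u (fst w) (snd w) *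
                 (indicator (WW (3 * R^2)) w * grushin (PF (ce m R e (snd w)) (HH m R) (HH m (R^2))) (fst w)))
           + integral\<^sup>L lborel (\<lambda>w. u (fst w) (snd w) *
                 (indicator (WW (3 * R^2)) w * (ce1 m R e (snd w) * Th R (fst w) ^ m)))"
proof -
  have T: "3 * R^2 > 0" using R by simp
  have tf: "test_fun (3 * R^2) (phiT m R (ce m R e) :: ('n,'k) pt \<Rightarrow> real \<Rightarrow> real)"
    by (rule test_fun_eps[OF m(1) R e])
  from ws[OF T] tf have id: "- (\<integral>z. u0 z * phiT m R (ce m R e) z 0 \<partial>lborel)
        = (LINT w : UNIV \<times> {0<..<3 * R^2} | lborel. \<bar>u (fst w) (snd w)\<bar> powr (p - 1) * u (fst w) (snd w) * phiT m R (ce m R e) (fst w) (snd w))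
        + (LINT w : UNIV \<times> {0<..<3 * R^2} | lborel. u (fst w) (snd w) * grushin (\<lambda>z. phiT m R (ce m R e) z (snd w)) (fst w))
        + (LINT w : UNIV \<times> {0<..<3 * R^2} | lborel. u (fst w) (snd w) * dtime (3 * R^2) (phiT m R (ce m R e)) (fst w) (snd w))"
    unfolding weak_solution_def by blast
  have c0: "ce m R e 0 = 0" using gg_plateau[OF m(1), of 0] by (simp add: ce_def hE_def ctR_def)
  have l: "- (\<integral>z. u0 z * phiT m R (ce m R e) z 0 \<partial>lborel) = 0"
    by (simp add: phiT_eq c0)
  have i1: "(LINT w : UNIV \<times> {0<..<3 * R^2} | lborel. \<bar>u (fst w) (snd w)\<bar> powr (p - 1) * u (fst w) (snd w) * phiT m R (ce m R e) (fst w) (snd w))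
     = integral\<^sup>L lborel (\<lambda>w. \<bar>u (fst w) (snd w)\<bar> powr (p - 1) * u (fst w) (snd w) *
                 (indicator (WW (3 * R^2)) w * (ce m R e (snd w) * Th R (fst w) ^ m)))"
    unfolding set_lebesgue_integral_def WW_def by (intro Bochner_Integration.integral_cong refl) (simp add: phiT_eq)
  have i2: "(LINT w : UNIV \<times> {0<..<3 * R^2} | lborel. u (fst w) (snd w) * grushin (\<lambda>z. phiT m R (ce m R e) z (snd w)) (fst w))
     = integral\<^sup>L lborel (\<lambda>w. u (fst w) (snd w) *
                 (indicator (WW (3 * R^2)) w * grushin (PF (ce m R e (snd w)) (HH m R) (HH m (R^2))) (fst w)))"
    unfolding set_lebesgue_integral_def WW_def by (intro Bochner_Integration.integral_cong refl) (simp add: grushin_phiT)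
  have i3: "(LINT w : UNIV \<times> {0<..<3 * R^2} | lborel. u (fst w) (snd w) * dtime (3 * R^2) (phiT m R (ce m R e)) (fst w) (snd w))
     = integral\<^sup>L lborel (\<lambda>w. u (fst w) (snd w) *
                 (indicator (WW (3 * R^2)) w * (ce1 m R e (snd w) * Th R (fst w) ^ m)))"
    unfolding set_lebesgue_integral_def WW_def
  proof (intro Bochner_Integration.integral_cong refl)
    fix w :: "('n,'k) pt \<times> real"
    show "indicator (UNIV \<times> {0<..<3 * R^2}) w *\<^sub>R (u (fst w) (snd w) * dtime (3 * R^2) (phiT m R (ce m R e)) (fst w) (snd w)) =
          u (fst w) (snd w) * (indicator (UNIV \<times> {0<..<3 * R^2}) w * (ce1 m R e (snd w) * Th R (fst w) ^ m))"
    proof (cases "w \<in> UNIV \<times> {0<..<3 * R^2}")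
      case True
      then have "snd w \<in> {0..3 * R^2}" by (auto simp: mem_Times_iff)
      then show ?thesis using True by (simp add: dtime_phiT[OF ce_deriv[OF m(1) R e] R])
    qed simp
  qed
  show ?thesis using id l i1 i2 i3 by simp
qed

lemma eps_bound:
  assumes R: "R > 0" and e: "e > 0"
  shows "integrable lborel (\<lambda>w. \<bar>u (fst w) (snd w)\<bar> powr (p - 1) * u (fst w) (snd w) *
                 (indicator (WW (3 * R^2)) w * (ce m R e (snd w) * Th R (fst w) ^ m)))
     \<and> integral\<^sup>L lborel (\<lambda>w. \<bar>u (fst w) (snd w)\<bar> powr (p - 1) * u (fst w) (snd w) *
                 (indicator (WW (3 * R^2)) w * (ce m R e (snd w) * Th R (fst w) ^ m)))
     \<le> 2 * (2 powr (1 / (p - 1)) * ((CG m TYPE('n \<times> 'k) + 48 * real m ^ 2) / R^2) powr (p / (p - 1)))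
          * measure lborel (BX R :: (('n,'k) pt \<times> real) set)"
proof -
  have R2: "R^2 > 0" using R by simp
  define T where "T = 3 * R^2"
  define uu where "uu w = u (fst w) (snd w)" for w :: "('n,'k) pt \<times> real"
  define vv where "vv w = \<bar>u (fst w) (snd w)\<bar> powr (p - 1) * u (fst w) (snd w)" for w :: "('n,'k) pt \<times> real"
  define g1 where "g1 w = indicator (WW T) w * (ce m R e (snd w) * Th R (fst w) ^ m)" for w :: "('n,'k) pt \<times> real"
  define g2 where "g2 w = indicator (WW T) w * grushin (PF (ce m R e (snd w)) (HH m R) (HH m (R^2))) (fst w)"
    for w :: "('n,'k) pt \<times> real"
  define g3 where "g3 w = indicator (WW T) w * (ce1 m R e (snd w) * Th R (fst w) ^ m)" for w :: "('n,'k) pt \<times> real"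
  define A where "A = (CG m TYPE('n \<times> 'k) + 48 * real m ^ 2) / R^2"
  define K where "K = 2 powr (1 / (p - 1)) * A powr (p / (p - 1))"
  have CGn: "CG m TYPE('n \<times> 'k) \<ge> 0" by (simp add: CG_def)
  have A0: "A \<ge> 0" using CGn by (simp add: A_def)
  have K0: "K \<ge> 0" by (simp add: K_def)
  define BXR where "BXR = (BX R :: (('n,'k) pt \<times> real) set)"
  have mBX: "measure lborel (BX R :: (('n,'k) pt \<times> real) set) \<ge> 0" by simp
  have supp: "g1 w = 0 \<and> g2 w = 0 \<and> g3 w = 0" if nw: "\<not> (w \<in> BXR \<and> e \<le> snd w)" for w
  proof (cases "w \<in> WW T")
    case False then show ?thesis by (simp add: g1_def g2_def g3_def)
  next
    case True
    then have t0: "snd w > 0" by (auto simp: WW_def mem_Times_iff)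
    have g2z: "g2 w = 0" if "ce m R e (snd w) * Th R (fst w) ^ (m - 2) = 0"
    proof -
      have "\<bar>grushin (PF (ce m R e (snd w)) (HH m R) (HH m (R^2))) (fst w)\<bar>
           \<le> \<bar>ce m R e (snd w)\<bar> * (CG m TYPE('n \<times> 'k) / R^2) * Th R (fst w) ^ (m - 2)"
        by (rule grushin_bound'[OF m(1) R])
      also have "\<dots> = 0" using that by (auto simp: abs_mult)
      finally show ?thesis by (simp add: g2_def)
    qed
    show ?thesis
    proof (cases "snd w < e")
      case True
      have "gg m (snd w / e) = 1 \<and> gg1 m (snd w / e) = 0"
        using gg_plateau[OF m(1), of "snd w / e"] True t0 e by (auto simp: abs_divide)
      then have "ce m R e (snd w) = 0" "ce1 m R e (snd w) = 0"
        by (auto simp: ce_def ce1_def hE_def hE1_def)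
      then show ?thesis using g2z by (simp add: g1_def g3_def)
    next
      case False
      then have "w \<notin> BX R" using nw by (auto simp: BXR_def)
      then have "Psi R w = 0" using Psi_nz_BX[OF R] by blast
      then consider "Th R (fst w) = 0" | "qf (snd w / R^2) = 0" by (auto simp: Psi_def)
      then show ?thesis
      proof cases
        case 1 then show ?thesis using g2z m(1) by (simp add: g1_def g3_def)
      next
        case 2
        have c: "ce m R e (snd w) = 0" using 2 m(1) by (simp add: ce_def ctR_def gg_eq)
        have "\<bar>ct1R m R (snd w)\<bar> \<le> 0" using ct1R_le[OF m(1) R, of "snd w"] 2 m(1) by (simp add: zero_power)
        then have "ce1 m R e (snd w) = 0" using 2 m(1) by (simp add: ce1_def ctR_def gg_eq)
        then show ?thesis using g2z c by (simp add: g1_def g3_def)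
      qed
    qed
  qed
  have ceC: "continuous_on UNIV (ce m R e)" "continuous_on UNIV (ce1 m R e)"
    using cont_ce[OF R e] cont_ce1[OF R e] by auto
  have g1m: "g1 \<in> borel_measurable lborel"
  proof -
    have "continuous_on UNIV (\<lambda>w. ce m R e (snd w) * Th R (fst w :: ('n,'k) pt) ^ m)"
      by (intro continuous_intros continuous_on_compose2[OF ceC(1)] Th_cont[OF R]) auto
    then show ?thesis unfolding g1_def
      by (rule borel_measurable_times[OF borel_measurable_indicator[OF WW_sets] cont_meas])
  qed
  have g3m: "g3 \<in> borel_measurable lborel"
  proof -
    have "continuous_on UNIV (\<lambda>w. ce1 m R e (snd w) * Th R (fst w :: ('n,'k) pt) ^ m)"
      by (intro continuous_intros continuous_on_compose2[OF ceC(2)] Th_cont[OF R]) auto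
    then show ?thesis unfolding g3_def
      by (rule borel_measurable_times[OF borel_measurable_indicator[OF WW_sets] cont_meas])
  qed
  have g2m: "g2 \<in> borel_measurable lborel"
    unfolding g2_def
    by (rule borel_measurable_times[OF borel_measurable_indicator[OF WW_sets] grushin_meas[OF m(1) R ceC(1)]])
  have qpow: "qf s ^ (m - 2) \<le> 1" "0 \<le> qf s ^ (m - 2)" for s
    using qf_bounds[of s] by (auto intro: power_le_one)
  have ce_abs: "\<bar>ce m R e t\<bar> \<le> 1" for t
  proof -
    have "qf (t / R^2) ^ (m - 2) * hE m e t \<le> 1"
      using qpow[of "t / R^2"] hE_bounds[of m e t] by (intro mult_le_one) auto
    then show ?thesis using ce_le[OF m(1), of R e t] by linarith
  qed
  have g1b: "\<bar>g1 w\<bar> \<le> 1" for w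
    using ce_abs[of "snd w"] Th_bounds[of R "fst w"]
    by (auto simp: g1_def abs_mult indicator_def intro!: mult_le_one power_le_one)
  have g2b: "\<bar>g2 w\<bar> \<le> CG m TYPE('n \<times> 'k) / R^2" for w
  proof -
    have "\<bar>grushin (PF (ce m R e (snd w)) (HH m R) (HH m (R^2))) (fst w)\<bar>
         \<le> \<bar>ce m R e (snd w)\<bar> * (CG m TYPE('n \<times> 'k) / R^2) * Th R (fst w) ^ (m - 2)"
      by (rule grushin_bound'[OF m(1) R])
    also have "\<dots> \<le> 1 * (CG m TYPE('n \<times> 'k) / R^2) * 1"
      using ce_abs[of "snd w"] Th_bounds[of R "fst w"] CGn
      by (intro mult_mono power_le_one) auto
    finally show ?thesis by (auto simp: g2_def abs_mult indicator_def)
  qed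
  have g3b: "\<bar>g3 w\<bar> \<le> 48 * real m ^ 2 / R^2 + 48 * real m ^ 2 / e" for w
  proof -
    have a1: "\<bar>ct1R m R t\<bar> \<le> 48 * real m ^ 2 / R^2" for t
    proof -
      have "(48 * real m ^ 2 / R^2) * qf (t / R^2) ^ (m - 2) \<le> 48 * real m ^ 2 / R^2"
        using qpow[of "t / R^2"] by (intro mult_left_le) auto
      then show ?thesis using ct1R_le[OF m(1) R, of t] by linarith
    qed
    have a2: "\<bar>hE1 m e t\<bar> \<le> 48 * real m ^ 2 / e" for t
    proof -
      have "48 * real m ^ 2 * qf (t / e) ^ (m - 2) \<le> 48 * real m ^ 2"
        using qpow[of "t / e"] by (intro mult_left_le) auto
      then have "\<bar>gg1 m (t / e)\<bar> \<le> 48 * real m ^ 2" using gg1_bound[OF m(1), of "t / e"] by linarith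
      then show ?thesis using e by (simp add: hE1_def abs_divide divide_right_mono)
    qed
    have "\<bar>ce1 m R e t\<bar> \<le> 48 * real m ^ 2 / R^2 + 48 * real m ^ 2 / e" for t
    proof -
      have "\<bar>ce1 m R e t\<bar> \<le> \<bar>ct1R m R t\<bar> * \<bar>hE m e t\<bar> + \<bar>ctR m R t\<bar> * \<bar>hE1 m e t\<bar>"
        unfolding ce1_def by (simp add: abs_mult[symmetric] abs_triangle_ineq)
      also have "\<dots> \<le> (48 * real m ^ 2 / R^2) * 1 + 1 * (48 * real m ^ 2 / e)"
        using a1[of t] a2[of t] hE_bounds[of m e t] gg_bounds[of m "t / R^2"]
        by (intro add_mono mult_mono) (auto simp: ctR_def)
      finally show ?thesis by simp
    qed
    note ce1b = this
    have Tm: "Th R (fst w) ^ m \<le> 1" "0 \<le> Th R (fst w) ^ m"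
      using Th_bounds[of R "fst w"] by (auto intro: power_le_one)
    have nn: "0 \<le> 48 * real m ^ 2 / R^2 + 48 * real m ^ 2 / e" using e by simp
    have "\<bar>ce1 m R e (snd w) * Th R (fst w) ^ m\<bar> \<le> 48 * real m ^ 2 / R^2 + 48 * real m ^ 2 / e"
      using ce1b[of "snd w"] Tm nn by (simp add: abs_mult) (metis abs_ge_zero mult_right_le_one_le order_trans)
    then show ?thesis using nn by (auto simp: g3_def abs_mult indicator_def)
  qed
  have int1: "integrable lborel (\<lambda>w. vv w * g1 w)"
    unfolding vv_def by (rule int_KK(2)[OF R e g1m g1b]) (use supp in \<open>auto simp: BXR_def\<close>)
  have int2: "integrable lborel (\<lambda>w. uu w * g2 w)"
    unfolding uu_def by (rule int_KK(1)[OF R e g2m g2b]) (use supp in \<open>auto simp: BXR_def\<close>)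
  have int3: "integrable lborel (\<lambda>w. uu w * g3 w)"
    unfolding uu_def by (rule int_KK(1)[OF R e g3m g3b]) (use supp in \<open>auto simp: BXR_def\<close>)
  have intB: "integrable lborel (\<lambda>w. indicator BXR w :: real)"
    using emeasure_lborel_cbox_finite[of "- BU R" "BU R"]
    by (intro integrable_real_indicator) (simp_all add: BXR_def BX_def infinity_ennreal_def)
  have id: "0 = integral\<^sup>L lborel (\<lambda>w. vv w * g1 w) + integral\<^sup>L lborel (\<lambda>w. uu w * g2 w)
              + integral\<^sup>L lborel (\<lambda>w. uu w * g3 w)"
    using eps_identity[OF R e] unfolding vv_def uu_def g1_def g2_def g3_def T_def by simp
  have pw: "AE w in lborel. - (uu w * g2 w + uu w * g3 w) \<le> (1/2) * (vv w * g1 w) + K * indicator (BXR) w"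
    using AE_pos
  proof (rule AE_mp[OF _ AE_I2], intro impI)
    fix w :: "('n,'k) pt \<times> real"
    assume h: "0 < snd w \<longrightarrow> 0 \<le> u (fst w) (snd w) \<and>
      \<bar>u (fst w) (snd w)\<bar> powr (p - 1) * u (fst w) (snd w) = u (fst w) (snd w) powr p"
    show "- (uu w * g2 w + uu w * g3 w) \<le> (1/2) * (vv w * g1 w) + K * indicator (BXR) w"
    proof (cases "w \<in> WW T")
      case False
      then show ?thesis using K0 by (simp add: g1_def g2_def g3_def)
    next
      case True
      then have t0: "snd w > 0" by (auto simp: WW_def mem_Times_iff)
      with h have u0': "uu w \<ge> 0" and vv: "vv w = uu w powr p" by (auto simp: uu_def vv_def)
      let ?q = "qf (snd w / R^2)" and ?Th = "Th R (fst w)" and ?h = "hE m e (snd w)"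
      have q: "0 \<le> ?q" "?q \<le> 1" by (rule qf_bounds)+
      have hb: "0 \<le> ?h" "?h \<le> 1" by (rule hE_bounds)+
      have Tb: "0 \<le> ?Th" "?Th \<le> 1" by (rule Th_bounds)+
      have PsiP: "Psi R w ^ (m - 2) = ?q ^ (m - 2) * ?Th ^ (m - 2)" by (rule Psi_pow)
      have b2: "- (uu w * g2 w) \<le> uu w * (CG m TYPE('n \<times> 'k) / R^2) * Psi R w ^ (m - 2) * ?h"
      proof -
        have "\<bar>g2 w\<bar> \<le> \<bar>ce m R e (snd w)\<bar> * (CG m TYPE('n \<times> 'k) / R^2) * ?Th ^ (m - 2)"
          using grushin_bound'[OF m(1) R] True by (simp add: g2_def)
        also have "\<dots> \<le> (?q ^ (m - 2) * ?h) * (CG m TYPE('n \<times> 'k) / R^2) * ?Th ^ (m - 2)"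
          using ce_le[OF m(1), of R e "snd w"] CGn Tb
          by (intro mult_right_mono) auto
        also have "\<dots> = (CG m TYPE('n \<times> 'k) / R^2) * Psi R w ^ (m - 2) * ?h"
          unfolding PsiP by (simp add: algebra_simps)
        finally have "\<bar>g2 w\<bar> \<le> (CG m TYPE('n \<times> 'k) / R^2) * Psi R w ^ (m - 2) * ?h" .
        then have "uu w * \<bar>g2 w\<bar> \<le> uu w * ((CG m TYPE('n \<times> 'k) / R^2) * Psi R w ^ (m - 2) * ?h)"
          using u0' by (rule mult_left_mono)
        moreover have "- (uu w * g2 w) \<le> uu w * \<bar>g2 w\<bar>" using u0'
          by (metis abs_ge_minus_self abs_mult abs_of_nonneg mult_minus_right)
        ultimately show ?thesis by (simp add: algebra_simps)
      qed
      have b3: "- (uu w * g3 w) \<le> uu w * (48 * real m ^ 2 / R^2) * Psi R w ^ (m - 2) * ?h"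
      proof -
        have hE1: "0 \<le> hE1 m e (snd w)" using hE1_nonneg[OF m(1) e] t0 by simp
        have g3: "g3 w = ct1R m R (snd w) * ?h * ?Th ^ m + ctR m R (snd w) * hE1 m e (snd w) * ?Th ^ m"
          using True by (simp add: g3_def ce1_def algebra_simps)
        have nn: "0 \<le> ctR m R (snd w) * hE1 m e (snd w) * ?Th ^ m"
          using hE1 gg_bounds[of m "snd w / R^2"] Tb by (simp add: ctR_def)
        have c1: "\<bar>ct1R m R (snd w)\<bar> \<le> (48 * real m ^ 2 / R^2) * ?q ^ (m - 2)"
          by (rule ct1R_le[OF m(1) R])
        have "\<bar>ct1R m R (snd w) * ?h * ?Th ^ m\<bar> = \<bar>ct1R m R (snd w)\<bar> * ?h * ?Th ^ m"
          using hb Tb by (simp add: abs_mult)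
        also have "\<dots> \<le> ((48 * real m ^ 2 / R^2) * ?q ^ (m - 2)) * ?h * ?Th ^ (m - 2)"
        proof (rule mult_mono[OF mult_right_mono[OF c1 hb(1)] Th_pow_le[OF m(1)]])
          show "0 \<le> 48 * real m ^ 2 / R\<^sup>2 * ?q ^ (m - 2) * ?h" using q hb by simp
          show "0 \<le> ?Th ^ m" using Tb by simp
        qed
        also have "\<dots> = (48 * real m ^ 2 / R^2) * Psi R w ^ (m - 2) * ?h"
          unfolding PsiP by (simp add: algebra_simps)
        finally have "- (ct1R m R (snd w) * ?h * ?Th ^ m) \<le> (48 * real m ^ 2 / R^2) * Psi R w ^ (m - 2) * ?h"
          by linarith
        then have "- g3 w \<le> (48 * real m ^ 2 / R^2) * Psi R w ^ (m - 2) * ?h" using g3 nn by linarith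
        then have "uu w * (- g3 w) \<le> uu w * ((48 * real m ^ 2 / R^2) * Psi R w ^ (m - 2) * ?h)"
          using u0' by (rule mult_left_mono)
        then show ?thesis by (simp add: algebra_simps)
      qed
      have Y: "uu w * A * Psi R w ^ (m - 2) \<le> (1/2) * (uu w powr p * Psi R w ^ m)
          + (1/2) powr (- 1 / (p - 1)) * A powr (p / (p - 1)) * indicator (BXR) w"
        unfolding BXR_def by (rule young_ind[OF p m u0' A0 _ R]) simp
      have half: "(1/2::real) powr (- 1 / (p - 1)) = 2 powr (1 / (p - 1))"
      proof -
        have "(1/2::real) powr (- 1 / (p - 1)) = (1/2::real) powr (- (1 / (p - 1)))" by simp
        also have "\<dots> = inverse ((1/2::real) powr (1 / (p - 1)))" by (rule powr_minus)
        also have "(1/2::real) powr (1 / (p - 1)) = 1 powr (1 / (p - 1)) / 2 powr (1 / (p - 1))"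
          by (rule powr_divide)
        finally show ?thesis by simp
      qed
      have half2: "(1/2::real) powr (- (1 / (p - 1))) = 2 powr (1 / (p - 1))" using half by simp
      have "- (uu w * g2 w + uu w * g3 w) \<le> uu w * A * Psi R w ^ (m - 2) * ?h"
        using b2 b3 by (simp add: A_def algebra_simps add_divide_distrib)
      also have "\<dots> \<le> ((1/2) * (uu w powr p * Psi R w ^ m) + K * indicator (BXR) w) * ?h"
        using Y hb by (intro mult_right_mono) (auto simp: K_def half half2)
      also have "\<dots> \<le> (1/2) * (uu w powr p * Psi R w ^ m * ?h) + K * indicator (BXR) w"
        using hb K0 by (simp add: algebra_simps mult_left_le indicator_def)
      also have "uu w powr p * Psi R w ^ m * ?h = vv w * g1 w"
        using True by (simp add: vv g1_def Psi_pow ce_def ctR_def gg_eq algebra_simps)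
      finally show ?thesis .
    qed
  qed
  have "- (integral\<^sup>L lborel (\<lambda>w. uu w * g2 w) + integral\<^sup>L lborel (\<lambda>w. uu w * g3 w))
      = integral\<^sup>L lborel (\<lambda>w. - (uu w * g2 w + uu w * g3 w))"
    using int2 int3 by simp
  also have "\<dots> \<le> integral\<^sup>L lborel (\<lambda>w. (1/2) * (vv w * g1 w) + K * indicator (BXR) w)"
    using int2 int3 int1 intB pw by (intro integral_mono_AE) auto
  also have "\<dots> = integral\<^sup>L lborel (\<lambda>w. (1/2) * (vv w * g1 w)) + integral\<^sup>L lborel (\<lambda>w. K * indicator (BXR) w)"
  proof -
    have i1': "integrable lborel (\<lambda>w. (1/2) * (vv w * g1 w))" using int1 by simp
    have iB': "integrable lborel (\<lambda>w. K * indicator (BXR) w)" using intB by simp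
    show ?thesis by (rule Bochner_Integration.integral_add[OF i1' iB'])
  qed
  also have "\<dots> = (1/2) * integral\<^sup>L lborel (\<lambda>w. vv w * g1 w) + K * measure lborel (BXR)"
    by simp
  finally have "integral\<^sup>L lborel (\<lambda>w. vv w * g1 w) \<le> 2 * K * measure lborel BXR"
    using id by linarith
  then show ?thesis using int1 unfolding vv_def g1_def K_def A_def T_def BXR_def by simp
qed

end


lemma const_bound:
  fixes X p R :: real
  assumes R: "R \<ge> 1" and X: "X \<ge> 0" and p: "p > 1"
    and Q: "real CARD('n) + 2 * real CARD('k) + 2 \<le> 2 * (p / (p - 1))"
  shows "(X / R^2) powr (p / (p - 1)) * measure lborel (BX R :: (('n::finite,'k::finite) pt \<times> real) set)
         \<le> X powr (p / (p - 1)) * 4 ^ (CARD('n) + CARD('k) + 1)"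
proof -
  define q where "q = p / (p - 1)"
  define N where "N = CARD('n)"
  define k where "k = CARD('k)"
  have R0: "R > 0" using R by simp
  have meas: "measure lborel (BX R :: (('n,'k) pt \<times> real) set) = 4 ^ (N + k + 1) * R ^ (N + 2 * k + 2)"
  proof -
    have a: "R ^ (N + 2 * k + 2) = R ^ N * (R^2) ^ k * R^2" by (simp only: power_add power_mult)
    have b: "(4::real) ^ (N + k + 1) = 4 ^ N * 4 ^ k * 4" by (simp add: power_add)
    have "measure lborel (BX R :: (('n,'k) pt \<times> real) set) = (4 * R) ^ N * (4 * R^2) ^ k * (4 * R^2)"
      using measure_BX[of R, where 'n='n and 'k='k] R0 unfolding N_def k_def by simp
    also have "\<dots> = (4 ^ N * 4 ^ k * 4) * (R ^ N * (R^2) ^ k * R^2)"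
      by (simp only: power_mult_distrib) (simp add: ac_simps power2_eq_square)
    finally show ?thesis unfolding a b .
  qed
  have Rpow: "R ^ (N + 2 * k + 2) = R powr (real (N + 2 * k + 2))"
    using R0 by (rule powr_realpow[symmetric])
  have R2q: "(R^2) powr q = R powr (2 * q)"
  proof -
    have "R powr (real 2) = R^2" by (rule powr_realpow[OF R0])
    then have "(R^2) powr q = (R powr 2) powr q" by simp
    also have "\<dots> = R powr (2 * q)" by (rule powr_powr)
    finally show ?thesis .
  qed
  have le: "R powr (real (N + 2 * k + 2)) \<le> R powr (2 * q)"
    using Q R unfolding q_def N_def k_def by (intro powr_mono) auto
  have "(X / R^2) powr q = X powr q / R powr (2 * q)"
    using X R0 by (simp add: powr_divide R2q)
  then have "(X / R^2) powr q * measure lborel (BX R :: (('n,'k) pt \<times> real) set)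
      = X powr q * 4 ^ (N + k + 1) * (R powr (real (N + 2 * k + 2)) / R powr (2 * q))"
    unfolding meas Rpow by (simp add: field_simps)
  also have "\<dots> \<le> X powr q * 4 ^ (N + k + 1) * 1"
    using le R0 by (intro mult_left_mono) (auto simp: divide_le_eq_1)
  finally show ?thesis unfolding q_def N_def k_def by simp
qed

context
  fixes u0 :: "('n::finite,'k::finite) pt \<Rightarrow> real" and p :: real
    and u :: "('n,'k) pt \<Rightarrow> real \<Rightarrow> real" and m :: nat
  assumes p: "p > 1" and gws: "global_weak_solution p u0 u"
    and pos: "AE w in lborel. snd w > 0 \<longrightarrow> u (fst w) (snd w) \<ge> 0"
    and m: "m \<ge> 3" "real m - 2 \<ge> real m / p"
    and Q: "real CARD('n) + 2 * real CARD('k) + 2 \<le> 2 * (p / (p - 1))"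
begin

lemma eventually_big:
  fixes w :: "('n,'k) pt \<times> real"
  assumes t: "snd w > 0"
  shows "\<forall>\<^sub>F n in sequentially. w \<in> PB (real n + 1) \<and> snd w < 3 * (real n + 1)^2
            \<and> 2 \<le> snd w / (1 / (real n + 1))"
proof -
  define M where "M = (\<Sum>i\<in>UNIV. \<bar>fst (fst w) $ i\<bar>) + (\<Sum>j\<in>UNIV. \<bar>snd (fst w) $ j\<bar>) + snd w + 2 / snd w"
  obtain N :: nat where N: "M \<le> real N" using real_arch_simple by blast
  show ?thesis unfolding eventually_sequentially
  proof (intro exI[of _ N] allI impI)
    fix n assume n: "N \<le> n"
    define R where "R = real n + 1"
    have R1: "R \<ge> 1" by (simp add: R_def)
    have RM: "M \<le> R" using N n by (simp add: R_def)
    have s1: "(\<Sum>i\<in>UNIV. \<bar>fst (fst w) $ i\<bar>) \<ge> 0" "(\<Sum>j\<in>UNIV. \<bar>snd (fst w) $ j\<bar>) \<ge> 0"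
      by (auto intro: sum_nonneg)
    have t2: "2 / snd w > 0" using t by simp
    have RR: "R \<le> R^2" using R1 by (simp add: power2_eq_square)
    have xi: "\<bar>fst (fst w) $ i\<bar> \<le> R" for i
    proof -
      have "\<bar>fst (fst w) $ i\<bar> \<le> (\<Sum>i\<in>UNIV. \<bar>fst (fst w) $ i\<bar>)"
        by (rule member_le_sum) auto
      then show ?thesis using RM s1 t t2 unfolding M_def by linarith
    qed
    have yj: "\<bar>snd (fst w) $ j\<bar> \<le> R^2" for j
    proof -
      have "\<bar>snd (fst w) $ j\<bar> \<le> (\<Sum>j\<in>UNIV. \<bar>snd (fst w) $ j\<bar>)"
        by (rule member_le_sum) auto
      then show ?thesis using RM s1 t t2 RR unfolding M_def by linarith
    qed
    have tR: "snd w \<le> R^2" using RM s1 t2 RR unfolding M_def by linarith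
    have "w \<in> PB R" unfolding PB_mem using xi yj tR t by auto
    moreover have "snd w < 3 * R^2" using tR t by linarith
    moreover have "2 \<le> snd w / (1 / R)"
    proof -
      have "2 / snd w \<le> R" using RM s1 t unfolding M_def by linarith
      then show ?thesis using t R1 by (simp add: field_simps)
    qed
    ultimately show "w \<in> PB (real n + 1) \<and> snd w < 3 * (real n + 1)^2 \<and> 2 \<le> snd w / (1 / (real n + 1))"
      by (simp add: R_def)
  qed
qed

lemma ce_one:
  assumes "m \<ge> 3" "0 < t" "t \<le> R^2" "R > 0" "2 \<le> t / e"
  shows "ce m R e t = 1"
proof -
  have "gg m (t / R^2) = 1" using gg_plateau[OF assms(1), of "t / R^2"] assms(2-4)
    by (simp add: abs_divide divide_le_eq_1)
  moreover have "gg m (t / e) = 0"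
  proof -
    have "2 \<le> \<bar>t / e\<bar>" using assms(5) by linarith
    then have "qf (t / e) = 0" by (rule qf_zero)
    then show ?thesis using assms(1) by (simp add: gg_eq)
  qed
  ultimately show ?thesis by (simp add: ce_def ctR_def hE_def)
qed

lemma Vint: "integrable lborel (\<lambda>w. indicator {w. snd w > 0} w * (\<bar>u (fst w) (snd w)\<bar> powr (p - 1) * u (fst w) (snd w)))"
proof -
  define X where "X = CG m TYPE('n \<times> 'k) + 48 * real m ^ 2"
  have X0: "X \<ge> 0" by (simp add: X_def CG_def)
  define f where "f n w = \<bar>u (fst w) (snd w)\<bar> powr (p - 1) * u (fst w) (snd w) *
       (indicator (WW (3 * (real n + 1)^2)) w * (ce m (real n + 1) (1 / (real n + 1)) (snd w) * Th (real n + 1) (fst w) ^ m))"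
    for n and w :: "('n,'k) pt \<times> real"
  define B where "B = 2 * (2 powr (1 / (p - 1)) * (X powr (p / (p - 1)) * 4 ^ (CARD('n) + CARD('k) + 1)))"
  show ?thesis
  proof (rule fatou_real[where f=f and B=B])
    fix n
    have R: "real n + 1 > 0" and e: "1 / (real n + 1) > 0" by auto
    note eb = eps_bound[OF p gws pos m R e]
    show "integrable lborel (f n)" using eb by (simp add: f_def[abs_def])
    have "integral\<^sup>L lborel (f n) \<le> 2 * (2 powr (1 / (p - 1)) * (X / (real n + 1)^2) powr (p / (p - 1)))
          * measure lborel (BX (real n + 1) :: (('n,'k) pt \<times> real) set)"
      using eb by (simp add: f_def[abs_def] X_def)
    also have "\<dots> = 2 * 2 powr (1 / (p - 1)) * ((X / (real n + 1)^2) powr (p / (p - 1))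
          * measure lborel (BX (real n + 1) :: (('n,'k) pt \<times> real) set))" by (simp add: ac_simps)
    also have "\<dots> \<le> 2 * 2 powr (1 / (p - 1)) * (X powr (p / (p - 1)) * 4 ^ (CARD('n) + CARD('k) + 1))"
      by (intro mult_left_mono const_bound[OF _ X0 p Q]) auto
    finally show "integral\<^sup>L lborel (f n) \<le> B" by (simp add: B_def ac_simps)
    show "AE w in lborel. 0 \<le> f n w"
      using AE_pos[OF p gws pos m]
    proof (rule AE_mp[OF _ AE_I2], intro impI)
      fix w :: "('n,'k) pt \<times> real"
      assume h: "0 < snd w \<longrightarrow> 0 \<le> u (fst w) (snd w) \<and>
          \<bar>u (fst w) (snd w)\<bar> powr (p - 1) * u (fst w) (snd w) = u (fst w) (snd w) powr p"
      show "0 \<le> f n w"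
      proof (cases "w \<in> WW (3 * (real n + 1)^2)")
        case False then show ?thesis by (simp add: f_def)
      next
        case True
        then have "snd w > 0" by (auto simp: WW_def mem_Times_iff)
        with h have "0 \<le> \<bar>u (fst w) (snd w)\<bar> powr (p - 1) * u (fst w) (snd w)" by simp
        moreover have "0 \<le> ce m (real n + 1) (1 / (real n + 1)) (snd w)"
          using gg_bounds hE_bounds by (simp add: ce_def ctR_def)
        moreover have "0 \<le> Th (real n + 1) (fst w) ^ m" using Th_bounds(1)[of "real n + 1" "fst w"] by simp
        ultimately show ?thesis using True by (simp add: f_def)
      qed
    qed
  next
    fix w :: "('n,'k) pt \<times> real"
    show "(\<lambda>n. f n w) \<longlonglongrightarrow> indicator {w. snd w > 0} w * (\<bar>u (fst w) (snd w)\<bar> powr (p - 1) * u (fst w) (snd w))"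
    proof (cases "snd w > 0")
      case False
      then have "f n w = 0" for n by (auto simp: f_def WW_def mem_Times_iff)
      then show ?thesis using False by simp
    next
      case True
      have "\<forall>\<^sub>F n in sequentially. f n w = indicator {w. snd w > 0} w * (\<bar>u (fst w) (snd w)\<bar> powr (p - 1) * u (fst w) (snd w))"
        using eventually_big[OF True]
      proof (rule eventually_mono)
        fix n assume h: "w \<in> PB (real n + 1) \<and> snd w < 3 * (real n + 1)^2 \<and> 2 \<le> snd w / (1 / (real n + 1))"
        have R: "real n + 1 > 0" by simp
        have W: "w \<in> WW (3 * (real n + 1)^2)" using h True by (auto simp: WW_def mem_Times_iff)
        have pb: "(\<forall>i. \<bar>fst (fst w) $ i\<bar> \<le> real n + 1) \<and> (\<forall>j. \<bar>snd (fst w) $ j\<bar> \<le> (real n + 1)^2) \<and> \<bar>snd w\<bar> \<le> (real n + 1)^2"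
          using h unfolding PB_mem by blast
        have th: "Th (real n + 1) (fst w) = 1" using Th_one[OF R] pb by blast
        have c: "ce m (real n + 1) (1 / (real n + 1)) (snd w) = 1"
          using ce_one[OF m(1) True _ R] pb h True by auto
        show "f n w = indicator {w. snd w > 0} w * (\<bar>u (fst w) (snd w)\<bar> powr (p - 1) * u (fst w) (snd w))"
          using W th c True by (simp add: f_def)
      qed
      then show ?thesis by (rule tendsto_eventually)
    qed
  qed
qed

lemma PB_compl_sets[measurable]: "- PB R \<in> sets (lborel :: (('n,'k) pt \<times> real) measure)"
proof -
  have "closed (PB R :: (('n,'k) pt \<times> real) set)" unfolding PB_def by (rule closed_cbox)
  then have "open (- PB R :: (('n,'k) pt \<times> real) set)" by (simp add: open_Compl)
  then show ?thesis by simp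
qed

lemma Vmeas: "(\<lambda>w. indicator {w. snd w > 0} w * (\<bar>u (fst w) (snd w)\<bar> powr (p - 1) * u (fst w) (snd w))) \<in> borel_measurable lborel"
  using Vint by (rule borel_measurable_integrable)

lemma Psi_cont: "R > 0 \<Longrightarrow> continuous_on UNIV (\<lambda>w. Psi R w ^ m :: real)"
  unfolding Psi_def by (intro continuous_intros Th_cont) auto

lemma eps_meas:
  assumes R: "R > 0"
  shows "(\<lambda>w. indicator (WW (3 * R^2)) w * (\<bar>u (fst w) (snd w)\<bar> powr (p - 1) * u (fst w) (snd w)
             * Psi R w ^ m * indicator (- PB R) w)) \<in> borel_measurable lborel"
proof -
  have eq: "indicator (WW (3 * R^2)) w * (\<bar>u (fst w) (snd w)\<bar> powr (p - 1) * u (fst w) (snd w)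
             * Psi R w ^ m * indicator (- PB R) w)
      = (indicator {w. snd w > 0} w * (\<bar>u (fst w) (snd w)\<bar> powr (p - 1) * u (fst w) (snd w)))
        * (indicator (WW (3 * R^2)) w * Psi R w ^ m * indicator (- PB R) w)" for w :: "('n,'k) pt \<times> real"
    by (auto simp: indicator_def WW_def mem_Times_iff)
  show ?thesis unfolding eq
    using Vmeas cont_meas[OF Psi_cont[OF R]] by measurable
qed

lemma eps_int:
  assumes R: "R > 0"
  shows "integrable lborel (\<lambda>w. indicator (WW (3 * R^2)) w * (\<bar>u (fst w) (snd w)\<bar> powr (p - 1) * u (fst w) (snd w)
             * Psi R w ^ m * indicator (- PB R) w))"
proof (rule Bochner_Integration.integrable_bound[OF integrable_abs[OF Vint] eps_meas[OF R]])
  show "AE w in lborel. norm (indicator (WW (3 * R^2)) w * (\<bar>u (fst w) (snd w)\<bar> powr (p - 1) * u (fst w) (snd w)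
             * Psi R w ^ m * indicator (- PB R) w))
     \<le> norm \<bar>indicator {w. snd w > 0} w * (\<bar>u (fst w) (snd w)\<bar> powr (p - 1) * u (fst w) (snd w))\<bar>"
  proof (rule AE_I2)
    fix w :: "('n,'k) pt \<times> real"
    have "Psi R w ^ m \<le> 1" "0 \<le> Psi R w ^ m" using Psi_bounds[of R w] by (auto intro: power_le_one)
    then show "norm (indicator (WW (3 * R^2)) w * (\<bar>u (fst w) (snd w)\<bar> powr (p - 1) * u (fst w) (snd w)
             * Psi R w ^ m * indicator (- PB R) w))
     \<le> norm \<bar>indicator {w. snd w > 0} w * (\<bar>u (fst w) (snd w)\<bar> powr (p - 1) * u (fst w) (snd w))\<bar>"
      by (auto simp: indicator_def WW_def mem_Times_iff abs_mult intro!: mult_right_le_one_le)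
  qed
qed

lemma main_bound:
  assumes R: "R > 0" and d: "\<delta> > 0"
  shows "(\<integral>z. u0 z * Th R z ^ m \<partial>lborel) \<le> 2 * (\<delta> * integral\<^sup>L lborel
      (\<lambda>w. indicator (WW (3 * R^2)) w * (\<bar>u (fst w) (snd w)\<bar> powr (p - 1) * u (fst w) (snd w)
             * Psi R w ^ m * indicator (- PB R) w))
    + \<delta> powr (- 1 / (p - 1)) * ((CG m TYPE('n \<times> 'k) + 48 * real m ^ 2) / R^2) powr (p / (p - 1))
        * measure lborel (BX R :: (('n,'k) pt \<times> real) set))"
proof -
  have R2: "R^2 > 0" using R by simp
  define T where "T = 3 * R^2"
  have T0: "T > 0" using R2 by (simp add: T_def)
  define uu where "uu w = u (fst w) (snd w)" for w :: "('n,'k) pt \<times> real"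
  define vv where "vv w = \<bar>u (fst w) (snd w)\<bar> powr (p - 1) * u (fst w) (snd w)" for w :: "('n,'k) pt \<times> real"
  define WT where "WT = (WW T :: (('n,'k) pt \<times> real) set)"
  define BXR where "BXR = (BX R :: (('n,'k) pt \<times> real) set)"
  define D where "D = (- PB R :: (('n,'k) pt \<times> real) set)"
  define X where "X = CG m TYPE('n \<times> 'k) + 48 * real m ^ 2"
  define A where "A = X / R^2"
  define K where "K = \<delta> powr (- 1 / (p - 1)) * A powr (p / (p - 1))"
  define g1 where "g1 w = indicator WT w * (ctR m R (snd w) * Th R (fst w) ^ m)" for w
  define g2 where "g2 w = indicator WT w * grushin (PF (ctR m R (snd w)) (HH m R) (HH m (R^2))) (fst w)" for w
  define g3 where "g3 w = indicator WT w * (ct1R m R (snd w) * Th R (fst w) ^ m)" for w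
  define E where "E w = indicator WT w * (vv w * Psi R w ^ m * indicator D w)" for w
  define Bf where "Bf w = \<delta> * E w + K * (indicator WT w * indicator BXR w)" for w
  have CGn: "CG m TYPE('n \<times> 'k) \<ge> 0" by (simp add: CG_def)
  have X0: "X \<ge> 0" using CGn by (simp add: X_def)
  have A0: "A \<ge> 0" using X0 by (simp add: A_def)
  have K0: "K \<ge> 0" by (simp add: K_def)
  have tf: "test_fun T (phiT m R (ctR m R) :: ('n,'k) pt \<Rightarrow> real \<Rightarrow> real)"
    unfolding T_def by (rule test_fun_main[OF m(1) R])
  from ws[OF p gws pos m T0] tf have id: "- (\<integral>z. u0 z * phiT m R (ctR m R) z 0 \<partial>lborel)
        = (LINT w : UNIV \<times> {0<..<T} | lborel. \<bar>u (fst w) (snd w)\<bar> powr (p - 1) * u (fst w) (snd w) * phiT m R (ctR m R) (fst w) (snd w))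
        + (LINT w : UNIV \<times> {0<..<T} | lborel. u (fst w) (snd w) * grushin (\<lambda>z. phiT m R (ctR m R) z (snd w)) (fst w))
        + (LINT w : UNIV \<times> {0<..<T} | lborel. u (fst w) (snd w) * dtime T (phiT m R (ctR m R)) (fst w) (snd w))"
    unfolding weak_solution_def by blast
  have c0: "ctR m R 0 = 1" using gg_plateau[OF m(1), of 0] by (simp add: ctR_def)
  have l: "(\<integral>z. u0 z * phiT m R (ctR m R) z 0 \<partial>lborel) = (\<integral>z. u0 z * Th R z ^ m \<partial>lborel)"
    by (simp add: phiT_eq c0)
  have i1: "(LINT w : UNIV \<times> {0<..<T} | lborel. \<bar>u (fst w) (snd w)\<bar> powr (p - 1) * u (fst w) (snd w) * phiT m R (ctR m R) (fst w) (snd w))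
     = integral\<^sup>L lborel (\<lambda>w. vv w * g1 w)"
    unfolding set_lebesgue_integral_def WT_def WW_def vv_def g1_def
    by (intro Bochner_Integration.integral_cong refl) (simp add: phiT_eq)
  have i2: "(LINT w : UNIV \<times> {0<..<T} | lborel. u (fst w) (snd w) * grushin (\<lambda>z. phiT m R (ctR m R) z (snd w)) (fst w))
     = integral\<^sup>L lborel (\<lambda>w. uu w * g2 w)"
    unfolding set_lebesgue_integral_def WT_def WW_def uu_def g2_def
    by (intro Bochner_Integration.integral_cong refl) (simp add: grushin_phiT)
  have i3: "(LINT w : UNIV \<times> {0<..<T} | lborel. u (fst w) (snd w) * dtime T (phiT m R (ctR m R)) (fst w) (snd w))
     = integral\<^sup>L lborel (\<lambda>w. uu w * g3 w)"
    unfolding set_lebesgue_integral_def WT_def WW_def uu_def g3_def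
  proof (intro Bochner_Integration.integral_cong refl)
    fix w :: "('n,'k) pt \<times> real"
    show "indicator (UNIV \<times> {0<..<T}) w *\<^sub>R (u (fst w) (snd w) * dtime T (phiT m R (ctR m R)) (fst w) (snd w)) =
          u (fst w) (snd w) * (indicator (UNIV \<times> {0<..<T}) w * (ct1R m R (snd w) * Th R (fst w) ^ m))"
    proof (cases "w \<in> UNIV \<times> {0<..<T}")
      case True
      then have "snd w \<in> {0..3 * R^2}" by (auto simp: mem_Times_iff T_def)
      then show ?thesis using True unfolding T_def by (simp add: dtime_phiT[OF ctR_deriv[OF m(1) R] R])
    qed simp
  qed
  have I1: "0 \<le> integral\<^sup>L lborel (\<lambda>w. vv w * g1 w)"
    using AE_pos[OF p gws pos m]
  proof (intro integral_nonneg_AE, rule AE_mp[OF _ AE_I2], intro impI)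
    fix w :: "('n,'k) pt \<times> real"
    assume h: "0 < snd w \<longrightarrow> 0 \<le> u (fst w) (snd w) \<and>
          \<bar>u (fst w) (snd w)\<bar> powr (p - 1) * u (fst w) (snd w) = u (fst w) (snd w) powr p"
    show "0 \<le> vv w * g1 w"
    proof (cases "w \<in> WT")
      case False then show ?thesis by (simp add: g1_def)
    next
      case True
      then have "snd w > 0" by (auto simp: WT_def WW_def mem_Times_iff)
      with h have "0 \<le> vv w" by (simp add: vv_def)
      moreover have "0 \<le> g1 w" using True gg_bounds Th_bounds(1)[of R "fst w"] by (simp add: g1_def ctR_def)
      ultimately show ?thesis by simp
    qed
  qed
  have intE: "integrable lborel E"
    using eps_int[OF R] unfolding E_def WT_def D_def vv_def T_def by simp
  have intB: "integrable lborel (\<lambda>w. indicator BXR w :: real)"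
    using emeasure_lborel_cbox_finite[of "- BU R" "BU R"]
    by (intro integrable_real_indicator) (simp_all add: BXR_def BX_def infinity_ennreal_def)
  have intWB: "integrable lborel (\<lambda>w. indicator WT w * indicator BXR w :: real)"
  proof (rule Bochner_Integration.integrable_bound[OF intB])
    show "(\<lambda>w. indicator WT w * indicator BXR w :: real) \<in> borel_measurable lborel"
      unfolding WT_def BXR_def by measurable
    show "AE w in lborel. norm (indicator WT w * indicator BXR w :: real) \<le> norm (indicator BXR w :: real)"
      by (intro AE_I2) (auto simp: indicator_def)
  qed
  have intBf: "integrable lborel Bf"
    unfolding Bf_def[abs_def] using intE intWB by simp
  have pw: "AE w in lborel. \<bar>uu w * g2 w\<bar> \<le> Bf w \<and> \<bar>uu w * g3 w\<bar> \<le> Bf w"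
    using AE_pos[OF p gws pos m]
  proof (rule AE_mp[OF _ AE_I2], intro impI)
    fix w :: "('n,'k) pt \<times> real"
    assume h: "0 < snd w \<longrightarrow> 0 \<le> u (fst w) (snd w) \<and>
          \<bar>u (fst w) (snd w)\<bar> powr (p - 1) * u (fst w) (snd w) = u (fst w) (snd w) powr p"
    show "\<bar>uu w * g2 w\<bar> \<le> Bf w \<and> \<bar>uu w * g3 w\<bar> \<le> Bf w"
    proof (cases "w \<in> WT")
      case False
      then show ?thesis using K0 by (simp add: g2_def g3_def Bf_def E_def)
    next
      case True
      then have t0: "snd w > 0" and tT: "snd w < T" by (auto simp: WT_def WW_def mem_Times_iff)
      with h have u0': "uu w \<ge> 0" and vv: "vv w = uu w powr p" by (auto simp: uu_def vv_def)
      have vv0: "vv w \<ge> 0" using vv by simp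
      have Bf0: "0 \<le> Bf w"
        using vv0 Psi_bounds(1)[of R w] d K0 by (auto simp: Bf_def E_def indicator_def)
      show ?thesis
      proof (cases "w \<in> PB R")
        case True
        have pb: "(\<forall>i. \<bar>fst (fst w) $ i\<bar> \<le> R) \<and> (\<forall>j. \<bar>snd (fst w) $ j\<bar> \<le> R^2) \<and> \<bar>snd w\<bar> \<le> R^2"
          using True unfolding PB_mem by blast
        have "grushin (PF (ctR m R (snd w)) (HH m R) (HH m (R^2))) (fst w) = 0"
          by (rule grushin_zero[OF m(1) R]) (use pb in auto)
        then have "g2 w = 0" unfolding g2_def by simp
        moreover have "g3 w = 0" unfolding g3_def using ct1R_zero[OF m(1) R] pb t0 by simp
        ultimately show ?thesis using Bf0 by simp
      next
        case False
        then have Dw: "indicator D w = (1::real)" by (simp add: D_def)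
        let ?q = "qf (snd w / R^2)" and ?Th = "Th R (fst w)"
        have PsiP: "Psi R w ^ (m - 2) = ?q ^ (m - 2) * ?Th ^ (m - 2)" by (rule Psi_pow)
        have Tb: "0 \<le> ?Th" "?Th \<le> 1" by (rule Th_bounds)+
        have Y: "uu w * A * Psi R w ^ (m - 2) \<le> Bf w"
        proof -
          have "uu w * A * Psi R w ^ (m - 2) \<le> \<delta> * (uu w powr p * Psi R w ^ m)
              + \<delta> powr (- 1 / (p - 1)) * A powr (p / (p - 1)) * indicator (BX R) w"
            by (rule young_ind[OF p m u0' A0 d R])
          also have "\<dots> = Bf w" using True Dw
            by (simp add: Bf_def E_def K_def vv BXR_def)
          finally show ?thesis .
        qed
        have b2: "\<bar>g2 w\<bar> \<le> A * Psi R w ^ (m - 2)"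
        proof -
          have "\<bar>g2 w\<bar> \<le> \<bar>ctR m R (snd w)\<bar> * (CG m TYPE('n \<times> 'k) / R^2) * ?Th ^ (m - 2)"
            using grushin_bound'[OF m(1) R] True by (simp add: g2_def)
          also have "\<dots> \<le> ?q ^ (m - 2) * (X / R^2) * ?Th ^ (m - 2)"
          proof (intro mult_mono)
            show "\<bar>ctR m R (snd w)\<bar> \<le> ?q ^ (m - 2)" by (rule ctR_le[OF m(1)])
            show "CG m TYPE('n \<times> 'k) / R^2 \<le> X / R^2" using R2 by (simp add: X_def divide_right_mono)
          qed (use Tb CGn X0 qf_bounds[of "snd w / R^2"] in auto)
          also have "\<dots> = A * Psi R w ^ (m - 2)" unfolding PsiP A_def by (simp add: ac_simps)
          finally show ?thesis .
        qed
        have b3: "\<bar>g3 w\<bar> \<le> A * Psi R w ^ (m - 2)"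
        proof -
          have "\<bar>g3 w\<bar> = \<bar>ct1R m R (snd w)\<bar> * ?Th ^ m"
            using True Tb by (simp add: g3_def abs_mult)
          also have "\<dots> \<le> ((48 * real m ^ 2 / R^2) * ?q ^ (m - 2)) * ?Th ^ (m - 2)"
            by (rule mult_mono[OF ct1R_le[OF m(1) R] Th_pow_le[OF m(1)]])
               (use Tb qf_bounds[of "snd w / R^2"] in auto)
          also have "\<dots> \<le> ((X / R^2) * ?q ^ (m - 2)) * ?Th ^ (m - 2)"
            using R2 CGn Tb qf_bounds[of "snd w / R^2"]
            by (intro mult_right_mono divide_right_mono) (auto simp: X_def)
          also have "\<dots> = A * Psi R w ^ (m - 2)" unfolding PsiP A_def by (simp add: ac_simps)
          finally show ?thesis .
        qed
        have "\<bar>uu w * g2 w\<bar> \<le> uu w * A * Psi R w ^ (m - 2)"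
          using mult_left_mono[OF b2 u0'] u0' by (simp add: abs_mult ac_simps)
        moreover have "\<bar>uu w * g3 w\<bar> \<le> uu w * A * Psi R w ^ (m - 2)"
          using mult_left_mono[OF b3 u0'] u0' by (simp add: abs_mult ac_simps)
        ultimately show ?thesis using Y by linarith
      qed
    qed
  qed
  have n2: "- integral\<^sup>L lborel (\<lambda>w. uu w * g2 w) \<le> integral\<^sup>L lborel Bf"
    by (rule neg_integral_le[OF intBf]) (use pw in \<open>auto elim!: eventually_mono\<close>)
  have n3: "- integral\<^sup>L lborel (\<lambda>w. uu w * g3 w) \<le> integral\<^sup>L lborel Bf"
    by (rule neg_integral_le[OF intBf]) (use pw in \<open>auto elim!: eventually_mono\<close>)
  have "integral\<^sup>L lborel Bf = \<delta> * integral\<^sup>L lborel E + K * integral\<^sup>L lborel (\<lambda>w. indicator WT w * indicator BXR w :: real)"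
    unfolding Bf_def[abs_def] using intE intWB by simp
  also have "integral\<^sup>L lborel (\<lambda>w. indicator WT w * indicator BXR w :: real) \<le> integral\<^sup>L lborel (\<lambda>w. indicator BXR w :: real)"
    using intWB intB by (intro integral_mono) (auto simp: indicator_def)
  then have "K * integral\<^sup>L lborel (\<lambda>w. indicator WT w * indicator BXR w :: real) \<le> K * measure lborel BXR"
    using K0 by (simp add: mult_left_mono)
  finally have IB: "integral\<^sup>L lborel Bf \<le> \<delta> * integral\<^sup>L lborel E + K * measure lborel BXR" by simp
  have "(\<integral>z. u0 z * Th R z ^ m \<partial>lborel) = - (integral\<^sup>L lborel (\<lambda>w. vv w * g1 w)
      + integral\<^sup>L lborel (\<lambda>w. uu w * g2 w) + integral\<^sup>L lborel (\<lambda>w. uu w * g3 w))"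
    using id l i1 i2 i3 by linarith
  also have "\<dots> \<le> 2 * integral\<^sup>L lborel Bf" using I1 n2 n3 by linarith
  also have "\<dots> \<le> 2 * (\<delta> * integral\<^sup>L lborel E + K * measure lborel BXR)" by (rule mult_left_mono[OF IB]) simp
  finally show ?thesis
    unfolding E_def K_def A_def X_def BXR_def D_def WT_def T_def vv_def by (simp add: ac_simps)
qed

lemma eps_lim:
  "(\<lambda>n. integral\<^sup>L lborel (\<lambda>w. indicator (WW (3 * (real n + 1)^2)) w * (\<bar>u (fst w) (snd w)\<bar> powr (p - 1) * u (fst w) (snd w)
             * Psi (real n + 1) w ^ m * indicator (- PB (real n + 1)) w))) \<longlonglongrightarrow> 0"
proof -
  let ?V = "\<lambda>w. indicator {w. snd w > 0} w * (\<bar>u (fst w) (snd w)\<bar> powr (p - 1) * u (fst w) (snd w))"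
  let ?s = "\<lambda>n w. indicator (WW (3 * (real n + 1)^2)) w * (\<bar>u (fst w) (snd w)\<bar> powr (p - 1) * u (fst w) (snd w)
             * Psi (real n + 1) w ^ m * indicator (- PB (real n + 1)) w)"
  have "(\<lambda>n. integral\<^sup>L lborel (?s n)) \<longlonglongrightarrow> integral\<^sup>L lborel (\<lambda>w::('n,'k) pt \<times> real. 0::real)"
  proof (rule integral_dominated_convergence[where w = "\<lambda>w. \<bar>?V w\<bar>"])
    show "(\<lambda>w::('n,'k) pt \<times> real. 0::real) \<in> borel_measurable lborel" by simp
    show "?s n \<in> borel_measurable lborel" for n by (rule eps_meas) simp
    show "integrable lborel (\<lambda>w. \<bar>?V w\<bar>)" using Vint by simp
    show "AE w in lborel. norm (?s n w) \<le> \<bar>?V w\<bar>" for n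
    proof (rule AE_I2)
      fix w :: "('n,'k) pt \<times> real"
      have "Psi (real n + 1) w ^ m \<le> 1" "0 \<le> Psi (real n + 1) w ^ m"
        using Psi_bounds[of "real n + 1" w] by (auto intro: power_le_one)
      then show "norm (?s n w) \<le> \<bar>?V w\<bar>"
        by (auto simp: indicator_def WW_def mem_Times_iff abs_mult intro!: mult_right_le_one_le)
    qed
    show "AE w in lborel. (\<lambda>n. ?s n w) \<longlonglongrightarrow> 0"
    proof (rule AE_I2)
      fix w :: "('n,'k) pt \<times> real"
      show "(\<lambda>n. ?s n w) \<longlonglongrightarrow> 0"
      proof (cases "snd w > 0")
        case False
        have "(\<lambda>n. ?s n w) = (\<lambda>n. 0)" by (rule ext) (use False in \<open>auto simp: WW_def mem_Times_iff\<close>)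
        then show ?thesis by simp
      next
        case True
        have "\<forall>\<^sub>F n in sequentially. ?s n w = 0"
          using eventually_big[OF True] by (rule eventually_mono) auto
        then show ?thesis by (rule tendsto_eventually)
      qed
    qed
  qed
  then show ?thesis by simp
qed

lemma Th_cont_z: "R > 0 \<Longrightarrow> continuous_on UNIV (\<lambda>z. Th R (z :: ('n,'k) pt))"
  unfolding Th_def by (intro continuous_intros) auto

lemma lhs_lim:
  assumes u0i: "integrable lborel u0"
  shows "(\<lambda>n. \<integral>z. u0 z * Th (real n + 1) z ^ m \<partial>lborel) \<longlonglongrightarrow> (\<integral>z. u0 z \<partial>lborel)"
proof (rule integral_dominated_convergence[where w = "\<lambda>z. \<bar>u0 z\<bar>"])
  show "u0 \<in> borel_measurable lborel" using u0i by (rule borel_measurable_integrable)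
  show "(\<lambda>z. u0 z * Th (real n + 1) z ^ m) \<in> borel_measurable lborel" for n
    using borel_measurable_integrable[OF u0i] cont_meas[OF Th_cont_z[of "real n + 1"]] by measurable
  show "integrable lborel (\<lambda>z. \<bar>u0 z\<bar>)" using u0i by simp
  show "AE z in lborel. norm (u0 z * Th (real n + 1) z ^ m) \<le> \<bar>u0 z\<bar>" for n
  proof (rule AE_I2)
    fix z :: "('n,'k) pt"
    have "Th (real n + 1) z ^ m \<le> 1" "0 \<le> Th (real n + 1) z ^ m"
      using Th_bounds[of "real n + 1" z] by (auto intro: power_le_one)
    then show "norm (u0 z * Th (real n + 1) z ^ m) \<le> \<bar>u0 z\<bar>"
      by (auto simp: abs_mult intro!: mult_left_le)
  qed
  show "AE z in lborel. (\<lambda>n. u0 z * Th (real n + 1) z ^ m) \<longlonglongrightarrow> u0 z"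
  proof (rule AE_I2)
    fix z :: "('n,'k) pt"
    have "\<forall>\<^sub>F n in sequentially. u0 z * Th (real n + 1) z ^ m = u0 z"
    proof -
      have t: "0 < snd (z, 1::real)" by simp
      show ?thesis using eventually_big[OF t]
    proof (rule eventually_mono)
      fix n assume "(z, 1::real) \<in> PB (real n + 1) \<and> snd (z, 1::real) < 3 * (real n + 1)^2 \<and> 2 \<le> snd (z, 1::real) / (1 / (real n + 1))"
      then have "(\<forall>i. \<bar>fst z $ i\<bar> \<le> real n + 1) \<and> (\<forall>j. \<bar>snd z $ j\<bar> \<le> (real n + 1)^2)"
        unfolding PB_mem by simp
      then have "Th (real n + 1) z = 1" by (intro Th_one) auto
      then show "u0 z * Th (real n + 1) z ^ m = u0 z" by simp
    qed
    qed
    then show "(\<lambda>n. u0 z * Th (real n + 1) z ^ m) \<longlonglongrightarrow> u0 z" by (rule tendsto_eventually)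
  qed
qed

lemma final_contra:
  assumes u0i: "integrable lborel u0" and apos: "(\<integral>z. u0 z \<partial>lborel) > 0"
  shows False
proof -
  define a where "a = (\<integral>z. u0 z \<partial>lborel)"
  have a0: "a > 0" using apos by (simp add: a_def)
  define X where "X = CG m TYPE('n \<times> 'k) + 48 * real m ^ 2"
  have X0: "X \<ge> 0" by (simp add: X_def CG_def)
  define K0 where "K0 = X powr (p / (p - 1)) * 4 ^ (CARD('n) + CARD('k) + 1)"
  have K00: "K0 \<ge> 0" by (simp add: K0_def)
  define y where "y = max 1 (16 * K0 / a)"
  have y1: "y \<ge> 1" by (simp add: y_def)
  define \<delta> where "\<delta> = y powr (p - 1)"
  have d: "\<delta> > 0" using y1 by (simp add: \<delta>_def)
  have dd: "\<delta> powr (- 1 / (p - 1)) = 1 / y"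
  proof -
    have "\<delta> powr (- 1 / (p - 1)) = y powr ((p - 1) * (- 1 / (p - 1)))" by (simp add: \<delta>_def powr_powr)
    also have "(p - 1) * (- 1 / (p - 1)) = -1" using p by (simp add: field_simps)
    finally show ?thesis using y1 by (simp add: powr_minus_divide)
  qed
  have dK: "\<delta> powr (- 1 / (p - 1)) * K0 \<le> a / 16"
  proof -
    have "16 * K0 / a \<le> y" by (simp add: y_def)
    then have "16 * K0 \<le> a * y" using a0 by (simp add: divide_le_eq mult.commute)
    then have "K0 / y \<le> a / 16" using y1 by (simp add: divide_le_eq field_simps)
    then show ?thesis unfolding dd by simp
  qed
  define eps where "eps n = integral\<^sup>L lborel (\<lambda>w. indicator (WW (3 * (real n + 1)^2)) w * (\<bar>u (fst w) (snd w)\<bar> powr (p - 1) * u (fst w) (snd w)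
             * Psi (real n + 1) w ^ m * indicator (- PB (real n + 1)) w))" for n
  have bound: "(\<integral>z. u0 z * Th (real n + 1) z ^ m \<partial>lborel) \<le> 2 * \<delta> * eps n + a / 8" for n
  proof -
    have R: "real n + 1 > 0" and R1: "real n + 1 \<ge> 1" by auto
    have cb: "(X / (real n + 1)^2) powr (p / (p - 1)) * measure lborel (BX (real n + 1) :: (('n,'k) pt \<times> real) set) \<le> K0"
      unfolding K0_def by (rule const_bound[OF R1 X0 p Q])
    have "(\<integral>z. u0 z * Th (real n + 1) z ^ m \<partial>lborel) \<le> 2 * (\<delta> * eps n
        + \<delta> powr (- 1 / (p - 1)) * ((X / (real n + 1)^2) powr (p / (p - 1))
        * measure lborel (BX (real n + 1) :: (('n,'k) pt \<times> real) set)))"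
      using main_bound[OF R d] by (simp add: eps_def X_def ac_simps)
    also have "\<dots> \<le> 2 * (\<delta> * eps n + \<delta> powr (- 1 / (p - 1)) * K0)"
      using cb by (intro mult_left_mono add_left_mono) auto
    also have "\<dots> \<le> 2 * \<delta> * eps n + a / 8" using dK by simp
    finally show ?thesis .
  qed
  have "(\<lambda>n. 2 * \<delta> * eps n + a / 8) \<longlonglongrightarrow> 2 * \<delta> * 0 + a / 8"
    using eps_lim unfolding eps_def by (intro tendsto_intros)
  then have "a \<le> 2 * \<delta> * 0 + a / 8"
    using lhs_lim[OF u0i] bound unfolding a_def by (intro LIMSEQ_le) auto
  then show False using a0 by simp
qed

end

theorem theorem1_aux:
  fixes u0 :: "('n::finite, 'k::finite) pt \<Rightarrow> real" and p :: real
  assumes "p > 1"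
    and "integrable lborel u0"
    and "(\<integral>z. u0 z \<partial>lborel) > 0"
    and "p \<le> 1 + 2 / (real CARD('n) + 2 * real CARD('k))"
  shows "\<not> (\<exists>u. global_weak_solution p u0 u \<and>
                (AE w in lborel. snd w > 0 \<longrightarrow> u (fst w) (snd w) \<ge> 0))"
proof
  assume "\<exists>u. global_weak_solution p u0 u \<and> (AE w in lborel. snd w > 0 \<longrightarrow> u (fst w) (snd w) \<ge> 0)"
  then obtain u where gws: "global_weak_solution p u0 u"
    and pos: "AE w in lborel. snd w > 0 \<longrightarrow> u (fst w) (snd w) \<ge> 0" by blast
  have p: "p > 1" by (rule assms(1))
  define m where "m = nat \<lceil>2 * p / (p - 1)\<rceil> + 3"
  have m3: "m \<ge> 3" by (simp add: m_def)
  have mge: "real m \<ge> 2 * p / (p - 1)"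
  proof -
    have "2 * p / (p - 1) \<le> real (nat \<lceil>2 * p / (p - 1)\<rceil>)" by linarith
    then show ?thesis by (simp add: m_def)
  qed
  have mp: "real m - 2 \<ge> real m / p"
  proof -
    have "2 * p \<le> real m * (p - 1)" using mge p by (simp add: divide_le_eq)
    then have "2 * p \<le> real m * p - real m" by (simp add: algebra_simps)
    then have "2 \<le> real m - real m / p" using p by (simp add: field_simps)
    then show ?thesis by linarith
  qed
  have Q: "real CARD('n) + 2 * real CARD('k) + 2 \<le> 2 * (p / (p - 1))"
  proof -
    define Qn where "Qn = real CARD('n) + 2 * real CARD('k)"
    have c1: "0 < CARD('n)" by (rule zero_less_card_finite)
    then have c2: "0 < real CARD('n)" by simp
    have Qp: "Qn > 0" unfolding Qn_def using c2 by (simp add: add_pos_nonneg)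
    have "p - 1 \<le> 2 / Qn" using assms(4) by (simp add: Qn_def)
    then have "Qn * (p - 1) \<le> 2" using Qp by (simp add: field_simps)
    then have "(Qn + 2) * (p - 1) \<le> 2 * p" by (simp add: algebra_simps)
    then have "Qn + 2 \<le> 2 * p / (p - 1)" using p by (simp add: field_simps)
    then show ?thesis by (simp add: Qn_def)
  qed
  show False by (rule final_contra[OF p gws pos m3 mp Q assms(2) assms(3)])
qed


theorem theorem1:
  fixes u0 :: "('n::finite, 'k::finite) pt \<Rightarrow> real" and p :: real
  assumes "p > 1"
    and "integrable lborel u0"
    and "(\<integral>z. u0 z \<partial>lborel) > 0"
    and "p \<le> 1 + 2 / (real CARD('n) + 2 * real CARD('k))"
  shows "\<not> (\<exists>u. global_weak_solution p u0 u \<and>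
                (AE w in lborel. snd w > 0 \<longrightarrow> u (fst w) (snd w) \<ge> 0))"
    using assms by (rule theorem1_aux)

end
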